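(* Let $k$ be a commutative ring, $(H,\alpha)$ a monoidal Hom-Hopf algebra, $(A,\beta)$ a right $(H,\alpha)$-Hom-comodule algebra with a total integral $\phi:H\to A$ which is multiplicative ($\phi(hg)=\phi(h)\phi(g)$), and $(M,\mu)$ a relative Hom-Hopf module. Let $M_0=\{m\in M:\rho_M(m)=\mu^{-1}(m)\otimes 1_H\}$ and $C=\{b\in A:\rho_A(b)=\beta^{-1}(b)\otimes1_H\}$, and let $\tau_M:M\to M$, $\tau_M(m)=m_{[0]}\cdot\phi(S(m_{[1]}))$. Then: (1) $\tau_M(m)\in M_0$ for all $m\in M$, and $\tau_M|_{M_0}=\mathrm{id}_{M_0}$; (2) $\tau_A:A\to C$, $b\mapsto b_{[0]}\phi(S(b_{[1]}))$, is a morphism of left $(C,\beta)$-Hom-modules (via multiplication in $A$), so that $(C,\beta)$ is a direct summand of $(A,\beta)$ as a left $(C,\beta)$-Hom-module; (3) if moreover $\phi(H)\subseteq Z(A)$, then $\tau_M$ is a morphism of right $(C,\beta)$-Hom-modules, and the exact sequence $(M,\mu)\xrightarrow{\tau_M}(M_0,\mu)\to0$ splits as a sequence of right $(C,\beta)$-Hom-modules.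
   Context: Hom-category: objects $(M,\mu)$ with $\mu$ a $k$-linear automorphism; morphisms commute with the automorphisms. Monoidal Hom-algebra $(A,\alpha)$: $\alpha(ab)=\alpha(a)\alpha(b)$, $\alpha(1_A)=1_A$, $\alpha(a)(bc)=(ab)\alpha(c)$, $a1_A=1_Aa=\alpha(a)$. Monoidal Hom-coalgebra $(C,\gamma)$: $\Delta(c)=c_{(1)}\otimes c_{(2)}$, $\varepsilon$, $\Delta\gamma=(\gamma\otimes\gamma)\Delta$, $\varepsilon\gamma=\varepsilon$, $\gamma^{-1}(c_{(1)})\otimes c_{(2)(1)}\otimes c_{(2)(2)}=c_{(1)(1)}\otimes c_{(1)(2)}\otimes\gamma(c_{(2)})$, $\varepsilon(c_{(1)})c_{(2)}=\varepsilon(c_{(2)})c_{(1)}=\gamma^{-1}(c)$. Monoidal Hom-Hopf algebra $(H,\alpha)$: both, $\Delta,\varepsilon$ multiplicative and unital, antipode $S$ with $S(h_{(1)})h_{(2)}=h_{(1)}S(h_{(2)})=\varepsilon(h)1_H$, $S\alpha=\alpha S$. Right $(A,\beta)$-Hom-module: $(m\cdot a)\cdot\beta(b)=\mu(m)\cdot(ab)$, $m\cdot1_A=\mu(m)$, $\mu(m\cdot a)=\mu(m)\cdot\beta(a)$ (left modules analogously). Right $(H,\alpha)$-Hom-comodule: $\rho(m)=m_{[0]}\otimes m_{[1]}$, $m_{[0][0]}\otimes m_{[0][1]}\otimes\alpha^{-1}(m_{[1]})=\mu^{-1}(m_{[0]})\otimes\Delta(m_{[1]})$, $m_{[0]}\varepsilon(m_{[1]})=\mu^{-1}(m)$,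 $\rho(\mu(m))=\mu(m_{[0]})\otimes\alpha(m_{[1]})$. Right Hom-comodule algebra $(A,\beta)$: $\rho(ab)=a_{[0]}b_{[0]}\otimes a_{[1]}b_{[1]}$, $\rho(1_A)=1_A\otimes1_H$. Relative Hom-Hopf module: right $(A,\beta)$-Hom-module and right $(H,\alpha)$-Hom-comodule with $\rho(m\cdot a)=m_{[0]}\cdot a_{[0]}\otimes m_{[1]}a_{[1]}$. Total integral: $k$-linear $\phi:H\to A$ with $\rho_A\phi=(\phi\otimes\mathrm{id})\Delta$, $\phi\alpha=\beta\phi$, $\phi(1_H)=1_A$. $Z(A)$ is the center of $A$. $C$ is a Hom-subalgebra of $A$ and $(M_0,\mu|_{M_0})$ is a right $(C,\beta)$-Hom-module. *)

theory Defs
  imports Main "HOL.Modules"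
begin

text \<open>An element of the tensor product M (x)_k N is represented by a finite list of pure
  tensors [(m1,n1),...,(mr,nr)], standing for the sum m1(x)n1 + ... + mr(x)nr.  Two such
  lists represent the same element iff they are related by the congruence generated by the
  defining relations of the tensor product (bi-additivity, k-balancedness, commutativity and
  associativity of the formal sum).  The quotient is exactly M (x)_k N.\<close>

inductive tensor_eq2 ::
  "('k::comm_ring_1 \<Rightarrow> 'm::ab_group_add \<Rightarrow> 'm) \<Rightarrow> ('k \<Rightarrow> 'n::ab_group_add \<Rightarrow> 'n)
   \<Rightarrow> ('m \<times> 'n) list \<Rightarrow> ('m \<times> 'n) list \<Rightarrow> bool"
  for sM sN where
  t2_refl: "tensor_eq2 sM sN xs xs"
| t2_sym: "tensor_eq2 sM sN xs ys \<Longrightarrow> tensor_eq2 sM sN ys xs"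
| t2_trans: "tensor_eq2 sM sN xs ys \<Longrightarrow> tensor_eq2 sM sN ys zs \<Longrightarrow> tensor_eq2 sM sN xs zs"
| t2_ctx: "tensor_eq2 sM sN xs ys \<Longrightarrow> tensor_eq2 sM sN (us @ xs @ vs) (us @ ys @ vs)"
| t2_swap: "tensor_eq2 sM sN [a, b] [b, a]"
| t2_addl: "tensor_eq2 sM sN [(m + m', n)] [(m, n), (m', n)]"
| t2_addr: "tensor_eq2 sM sN [(m, n + n')] [(m, n), (m, n')]"
| t2_zerol: "tensor_eq2 sM sN [(0, n)] []"
| t2_zeror: "tensor_eq2 sM sN [(m, 0)] []"
| t2_bal: "tensor_eq2 sM sN [(sM c m, n)] [(m, sN c n)]"

inductive tensor_eq3 ::
  "('k::comm_ring_1 \<Rightarrow> 'm::ab_group_add \<Rightarrow> 'm) \<Rightarrow> ('k \<Rightarrow> 'n::ab_group_add \<Rightarrow> 'n)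
   \<Rightarrow> ('k \<Rightarrow> 'p::ab_group_add \<Rightarrow> 'p)
   \<Rightarrow> ('m \<times> 'n \<times> 'p) list \<Rightarrow> ('m \<times> 'n \<times> 'p) list \<Rightarrow> bool"
  for sM sN sP where
  t3_refl: "tensor_eq3 sM sN sP xs xs"
| t3_sym: "tensor_eq3 sM sN sP xs ys \<Longrightarrow> tensor_eq3 sM sN sP ys xs"
| t3_trans: "tensor_eq3 sM sN sP xs ys \<Longrightarrow> tensor_eq3 sM sN sP ys zs \<Longrightarrow> tensor_eq3 sM sN sP xs zs"
| t3_ctx: "tensor_eq3 sM sN sP xs ys \<Longrightarrow> tensor_eq3 sM sN sP (us @ xs @ vs) (us @ ys @ vs)"
| t3_swap: "tensor_eq3 sM sN sP [a, b] [b, a]"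
| t3_add1: "tensor_eq3 sM sN sP [(m + m', n, p)] [(m, n, p), (m', n, p)]"
| t3_add2: "tensor_eq3 sM sN sP [(m, n + n', p)] [(m, n, p), (m, n', p)]"
| t3_add3: "tensor_eq3 sM sN sP [(m, n, p + p')] [(m, n, p), (m, n, p')]"
| t3_zero1: "tensor_eq3 sM sN sP [(0, n, p)] []"
| t3_zero2: "tensor_eq3 sM sN sP [(m, 0, p)] []"
| t3_zero3: "tensor_eq3 sM sN sP [(m, n, 0)] []"
| t3_bal12: "tensor_eq3 sM sN sP [(sM c m, n, p)] [(m, sN c n, p)]"
| t3_bal23: "tensor_eq3 sM sN sP [(m, sN c n, p)] [(m, n, sP c p)]"

definition hom_object :: "('k::comm_ring_1 \<Rightarrow> 'm::ab_group_add \<Rightarrow> 'm) \<Rightarrow> ('m \<Rightarrow> 'm) \<Rightarrow> bool" where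
  "hom_object sM \<mu> \<longleftrightarrow> module sM \<and> module_hom sM sM \<mu> \<and> bij \<mu>"

definition k_bilinear ::
  "('k::comm_ring_1 \<Rightarrow> 'a::ab_group_add \<Rightarrow> 'a) \<Rightarrow> ('k \<Rightarrow> 'b::ab_group_add \<Rightarrow> 'b)
   \<Rightarrow> ('k \<Rightarrow> 'c::ab_group_add \<Rightarrow> 'c) \<Rightarrow> ('a \<Rightarrow> 'b \<Rightarrow> 'c) \<Rightarrow> bool" where
  "k_bilinear sA sB sC f \<longleftrightarrow> (\<forall>a. module_hom sB sC (f a)) \<and> (\<forall>b. module_hom sA sC (\<lambda>a. f a b))"

definition monoidal_hom_algebra ::
  "('k::comm_ring_1 \<Rightarrow> 'a::ab_group_add \<Rightarrow> 'a) \<Rightarrow> ('a \<Rightarrow> 'a \<Rightarrow> 'a) \<Rightarrow> 'a \<Rightarrow> ('a \<Rightarrow> 'a) \<Rightarrow> bool" where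
  "monoidal_hom_algebra sA mul one \<alpha> \<longleftrightarrow>
     hom_object sA \<alpha> \<and> k_bilinear sA sA sA mul \<and>
     (\<forall>a b. \<alpha> (mul a b) = mul (\<alpha> a) (\<alpha> b)) \<and> \<alpha> one = one \<and>
     (\<forall>a b c. mul (\<alpha> a) (mul b c) = mul (mul a b) (\<alpha> c)) \<and>
     (\<forall>a. mul a one = \<alpha> a \<and> mul one a = \<alpha> a)"

text \<open>Comultiplication: Delta c is a representative list of pure tensors of Delta(c) in C (x) C.\<close>
definition monoidal_hom_coalgebra ::
  "('k::comm_ring_1 \<Rightarrow> 'c::ab_group_add \<Rightarrow> 'c) \<Rightarrow> ('c \<Rightarrow> ('c \<times> 'c) list) \<Rightarrow> ('c \<Rightarrow> 'k)
   \<Rightarrow> ('c \<Rightarrow> 'c) \<Rightarrow> bool" where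
  "monoidal_hom_coalgebra sC \<Delta> \<epsilon> \<gamma> \<longleftrightarrow>
     hom_object sC \<gamma> \<and>
     (\<forall>x y. tensor_eq2 sC sC (\<Delta> (x + y)) (\<Delta> x @ \<Delta> y)) \<and>
     (\<forall>r x. tensor_eq2 sC sC (\<Delta> (sC r x)) (map (\<lambda>(a, b). (sC r a, b)) (\<Delta> x))) \<and>
     module_hom sC (*) \<epsilon> \<and>
     (\<forall>c. tensor_eq2 sC sC (\<Delta> (\<gamma> c)) (map (\<lambda>(a, b). (\<gamma> a, \<gamma> b)) (\<Delta> c))) \<and>
     (\<forall>c. \<epsilon> (\<gamma> c) = \<epsilon> c) \<and>
     (\<forall>c. tensor_eq3 sC sC sC
            (concat (map (\<lambda>(a, b). map (\<lambda>(x, y). (inv \<gamma> a, x, y)) (\<Delta> b)) (\<Delta> c)))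
            (concat (map (\<lambda>(a, b). map (\<lambda>(x, y). (x, y, \<gamma> b)) (\<Delta> a)) (\<Delta> c)))) \<and>
     (\<forall>c. sum_list (map (\<lambda>(a, b). sC (\<epsilon> a) b) (\<Delta> c)) = inv \<gamma> c) \<and>
     (\<forall>c. sum_list (map (\<lambda>(a, b). sC (\<epsilon> b) a) (\<Delta> c)) = inv \<gamma> c)"

definition monoidal_hom_hopf ::
  "('k::comm_ring_1 \<Rightarrow> 'h::ab_group_add \<Rightarrow> 'h) \<Rightarrow> ('h \<Rightarrow> 'h \<Rightarrow> 'h) \<Rightarrow> 'h
   \<Rightarrow> ('h \<Rightarrow> ('h \<times> 'h) list) \<Rightarrow> ('h \<Rightarrow> 'k) \<Rightarrow> ('h \<Rightarrow> 'h) \<Rightarrow> ('h \<Rightarrow> 'h) \<Rightarrow> bool" where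
  "monoidal_hom_hopf sH mul one \<Delta> \<epsilon> S \<alpha> \<longleftrightarrow>
     monoidal_hom_algebra sH mul one \<alpha> \<and> monoidal_hom_coalgebra sH \<Delta> \<epsilon> \<alpha> \<and>
     (\<forall>h g. tensor_eq2 sH sH (\<Delta> (mul h g))
        (concat (map (\<lambda>(a, b). map (\<lambda>(c, d). (mul a c, mul b d)) (\<Delta> g)) (\<Delta> h)))) \<and>
     tensor_eq2 sH sH (\<Delta> one) [(one, one)] \<and>
     (\<forall>h g. \<epsilon> (mul h g) = \<epsilon> h * \<epsilon> g) \<and> \<epsilon> one = 1 \<and>
     module_hom sH sH S \<and>
     (\<forall>h. sum_list (map (\<lambda>(a, b). mul (S a) b) (\<Delta> h)) = sH (\<epsilon> h) one) \<and>
     (\<forall>h. sum_list (map (\<lambda>(a, b). mul a (S b)) (\<Delta> h)) = sH (\<epsilon> h) one) \<and>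
     (\<forall>h. S (\<alpha> h) = \<alpha> (S h))"

definition right_hom_module ::
  "('k::comm_ring_1 \<Rightarrow> 'a::ab_group_add \<Rightarrow> 'a) \<Rightarrow> ('a \<Rightarrow> 'a \<Rightarrow> 'a) \<Rightarrow> 'a \<Rightarrow> ('a \<Rightarrow> 'a)
   \<Rightarrow> ('k \<Rightarrow> 'm::ab_group_add \<Rightarrow> 'm) \<Rightarrow> ('m \<Rightarrow> 'm) \<Rightarrow> ('m \<Rightarrow> 'a \<Rightarrow> 'm) \<Rightarrow> bool" where
  "right_hom_module sA mul one \<beta> sM \<mu> act \<longleftrightarrow>
     hom_object sM \<mu> \<and> k_bilinear sM sA sM act \<and>
     (\<forall>m a b. act (act m a) (\<beta> b) = act (\<mu> m) (mul a b)) \<and>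
     (\<forall>m. act m one = \<mu> m) \<and>
     (\<forall>m a. \<mu> (act m a) = act (\<mu> m) (\<beta> a))"

definition right_hom_comodule ::
  "('k::comm_ring_1 \<Rightarrow> 'h::ab_group_add \<Rightarrow> 'h) \<Rightarrow> ('h \<Rightarrow> ('h \<times> 'h) list) \<Rightarrow> ('h \<Rightarrow> 'k)
   \<Rightarrow> ('h \<Rightarrow> 'h) \<Rightarrow> ('k \<Rightarrow> 'm::ab_group_add \<Rightarrow> 'm) \<Rightarrow> ('m \<Rightarrow> 'm)
   \<Rightarrow> ('m \<Rightarrow> ('m \<times> 'h) list) \<Rightarrow> bool" where
  "right_hom_comodule sH \<Delta> \<epsilon> \<alpha> sM \<mu> \<rho> \<longleftrightarrow>
     hom_object sM \<mu> \<and>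
     (\<forall>x y. tensor_eq2 sM sH (\<rho> (x + y)) (\<rho> x @ \<rho> y)) \<and>
     (\<forall>r x. tensor_eq2 sM sH (\<rho> (sM r x)) (map (\<lambda>(a, b). (sM r a, b)) (\<rho> x))) \<and>
     (\<forall>m. tensor_eq3 sM sH sH
            (concat (map (\<lambda>(a, b). map (\<lambda>(x, y). (x, y, inv \<alpha> b)) (\<rho> a)) (\<rho> m)))
            (concat (map (\<lambda>(a, b). map (\<lambda>(x, y). (inv \<mu> a, x, y)) (\<Delta> b)) (\<rho> m)))) \<and>
     (\<forall>m. sum_list (map (\<lambda>(a, b). sM (\<epsilon> b) a) (\<rho> m)) = inv \<mu> m) \<and>
     (\<forall>m. tensor_eq2 sM sH (\<rho> (\<mu> m)) (map (\<lambda>(a, b). (\<mu> a, \<alpha> b)) (\<rho> m)))"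

definition right_hom_comodule_algebra ::
  "('k::comm_ring_1 \<Rightarrow> 'h::ab_group_add \<Rightarrow> 'h) \<Rightarrow> ('h \<Rightarrow> 'h \<Rightarrow> 'h) \<Rightarrow> 'h
   \<Rightarrow> ('h \<Rightarrow> ('h \<times> 'h) list) \<Rightarrow> ('h \<Rightarrow> 'k) \<Rightarrow> ('h \<Rightarrow> 'h)
   \<Rightarrow> ('k \<Rightarrow> 'a::ab_group_add \<Rightarrow> 'a) \<Rightarrow> ('a \<Rightarrow> 'a \<Rightarrow> 'a) \<Rightarrow> 'a \<Rightarrow> ('a \<Rightarrow> 'a)
   \<Rightarrow> ('a \<Rightarrow> ('a \<times> 'h) list) \<Rightarrow> bool" where
  "right_hom_comodule_algebra sH mulH oneH \<Delta> \<epsilon> \<alpha> sA mulA oneA \<beta> \<rho> \<longleftrightarrow>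
     monoidal_hom_algebra sA mulA oneA \<beta> \<and>
     right_hom_comodule sH \<Delta> \<epsilon> \<alpha> sA \<beta> \<rho> \<and>
     (\<forall>a b. tensor_eq2 sA sH (\<rho> (mulA a b))
        (concat (map (\<lambda>(x, u). map (\<lambda>(y, v). (mulA x y, mulH u v)) (\<rho> b)) (\<rho> a)))) \<and>
     tensor_eq2 sA sH (\<rho> oneA) [(oneA, oneH)]"

definition relative_hom_hopf_module ::
  "('k::comm_ring_1 \<Rightarrow> 'h::ab_group_add \<Rightarrow> 'h) \<Rightarrow> ('h \<Rightarrow> 'h \<Rightarrow> 'h)
   \<Rightarrow> ('h \<Rightarrow> ('h \<times> 'h) list) \<Rightarrow> ('h \<Rightarrow> 'k) \<Rightarrow> ('h \<Rightarrow> 'h)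
   \<Rightarrow> ('k \<Rightarrow> 'a::ab_group_add \<Rightarrow> 'a) \<Rightarrow> ('a \<Rightarrow> 'a \<Rightarrow> 'a) \<Rightarrow> 'a \<Rightarrow> ('a \<Rightarrow> 'a)
   \<Rightarrow> ('a \<Rightarrow> ('a \<times> 'h) list)
   \<Rightarrow> ('k \<Rightarrow> 'm::ab_group_add \<Rightarrow> 'm) \<Rightarrow> ('m \<Rightarrow> 'm) \<Rightarrow> ('m \<Rightarrow> 'a \<Rightarrow> 'm)
   \<Rightarrow> ('m \<Rightarrow> ('m \<times> 'h) list) \<Rightarrow> bool" where
  "relative_hom_hopf_module sH mulH \<Delta> \<epsilon> \<alpha> sA mulA oneA \<beta> \<rho>A sM \<mu> act \<rho>M \<longleftrightarrow>
     right_hom_module sA mulA oneA \<beta> sM \<mu> act \<and>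
     right_hom_comodule sH \<Delta> \<epsilon> \<alpha> sM \<mu> \<rho>M \<and>
     (\<forall>m a. tensor_eq2 sM sH (\<rho>M (act m a))
        (concat (map (\<lambda>(x, u). map (\<lambda>(y, v). (act x y, mulH u v)) (\<rho>A a)) (\<rho>M m))))"

definition total_integral ::
  "('k::comm_ring_1 \<Rightarrow> 'h::ab_group_add \<Rightarrow> 'h) \<Rightarrow> 'h \<Rightarrow> ('h \<Rightarrow> ('h \<times> 'h) list) \<Rightarrow> ('h \<Rightarrow> 'h)
   \<Rightarrow> ('k \<Rightarrow> 'a::ab_group_add \<Rightarrow> 'a) \<Rightarrow> 'a \<Rightarrow> ('a \<Rightarrow> 'a) \<Rightarrow> ('a \<Rightarrow> ('a \<times> 'h) list)
   \<Rightarrow> ('h \<Rightarrow> 'a) \<Rightarrow> bool" where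
  "total_integral sH oneH \<Delta> \<alpha> sA oneA \<beta> \<rho>A \<phi> \<longleftrightarrow>
     module_hom sH sA \<phi> \<and>
     (\<forall>h. tensor_eq2 sA sH (\<rho>A (\<phi> h)) (map (\<lambda>(a, b). (\<phi> a, b)) (\<Delta> h))) \<and>
     (\<forall>h. \<phi> (\<alpha> h) = \<beta> (\<phi> h)) \<and> \<phi> oneH = oneA"

definition coinvariants ::
  "('k::comm_ring_1 \<Rightarrow> 'm::ab_group_add \<Rightarrow> 'm) \<Rightarrow> ('k \<Rightarrow> 'h::ab_group_add \<Rightarrow> 'h) \<Rightarrow> 'h
   \<Rightarrow> ('m \<Rightarrow> 'm) \<Rightarrow> ('m \<Rightarrow> ('m \<times> 'h) list) \<Rightarrow> 'm set" where
  "coinvariants sM sH oneH \<mu> \<rho> = {m. tensor_eq2 sM sH (\<rho> m) [(inv \<mu> m, oneH)]}"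

text \<open>tau m = m_[0] . phi(S(m_[1])) (the map m (x) h \<mapsto> m . phi(S h) is bilinear, so this is
  the value of the induced linear map on rho(m)).\<close>
definition tau_map ::
  "('m \<Rightarrow> 'a \<Rightarrow> 'm::ab_group_add) \<Rightarrow> ('h \<Rightarrow> 'a) \<Rightarrow> ('h \<Rightarrow> 'h) \<Rightarrow> ('m \<Rightarrow> ('m \<times> 'h) list) \<Rightarrow> 'm \<Rightarrow> 'm" where
  "tau_map act \<phi> S \<rho> m = sum_list (map (\<lambda>(a, b). act a (\<phi> (S b))) (\<rho> m))"

definition center :: "('a \<Rightarrow> 'a \<Rightarrow> 'a) \<Rightarrow> 'a set" where
  "center mul = {z. \<forall>a. mul z a = mul a z}"

end

theory Submission
  imports Defs "HOL-Library.Multiset"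
begin

definition lcong :: "('o list \<Rightarrow> 'o list \<Rightarrow> bool) \<Rightarrow> bool" where
 "lcong R \<longleftrightarrow> (\<forall>x. R x x) \<and> (\<forall>x y. R x y \<longrightarrow> R y x) \<and> (\<forall>x y z. R x y \<longrightarrow> R y z \<longrightarrow> R x z)
   \<and> (\<forall>x y u v. R x y \<longrightarrow> R (u@x@v) (u@y@v)) \<and> (\<forall>a b. R [a,b] [b,a])"

context
  fixes R :: "'o list \<Rightarrow> 'o list \<Rightarrow> bool"
  assumes R: "lcong R"
begin

lemma lc_refl: "R x x" using R by (simp add: lcong_def)
lemma lc_sym: "R x y \<Longrightarrow> R y x" using R unfolding lcong_def by blast
lemma lc_trans: "R x y \<Longrightarrow> R y z \<Longrightarrow> R x z" using R unfolding lcong_def by blast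
lemma lc_ctx: "R x y \<Longrightarrow> R (u@x@v) (u@y@v)" using R unfolding lcong_def by blast
lemma lc_swap: "R [a,b] [b,a]" using R unfolding lcong_def by blast

lemma lc_app: "R x x' \<Longrightarrow> R y y' \<Longrightarrow> R (x@y) (x'@y')"
  using lc_ctx[of x x' "[]" y] lc_ctx[of y y' x' "[]"] lc_trans by auto

lemma lc_cons: "R x x' \<Longrightarrow> R (a#x) (a#x')"
  using lc_ctx[of x x' "[a]" "[]"] by simp

lemma lc_swap1: "R ([a]@y) (y@[a])"
proof (induction y)
  case Nil then show ?case by (simp add: lc_refl)
next
  case (Cons b y)
  have "R ([] @ [a,b] @ y) ([] @ [b,a] @ y)" by (rule lc_ctx[OF lc_swap])
  moreover have "R ([b]@([a]@y)@[]) ([b]@(y@[a])@[])" by (rule lc_ctx[OF Cons])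
  ultimately show ?case using lc_trans by auto
qed

lemma lc_perm: "mset x = mset y \<Longrightarrow> R x y"
proof (induction x arbitrary: y)
  case Nil then have "y = []" by simp
  then show ?case by (simp add: lc_refl)
next
  case (Cons a x)
  then have "a \<in> set y" by (metis list.set_intros(1) set_mset_mset)
  then obtain y1 y2 where y: "y = y1 @ a # y2" by (meson split_list)
  with Cons.prems have "mset x = mset (y1 @ y2)" by simp
  with Cons.IH have "R x (y1@y2)" by blast
  hence 1: "R (a#x) ([a]@y1@y2)" using lc_cons by simp
  have "R ([]@([a]@y1)@y2) ([]@(y1@[a])@y2)" by (rule lc_ctx[OF lc_swap1])
  with 1 show ?case using y lc_trans by auto
qed

lemma lc_concat: "(\<And>z. z \<in> set L \<Longrightarrow> R (F z) (G z)) \<Longrightarrow> R (concat (map F L)) (concat (map G L))"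
  by (induction L) (auto simp: lc_refl lc_app)

lemma lc_concat_nil: "(\<And>z. z \<in> set L \<Longrightarrow> R (F z) []) \<Longrightarrow> R (concat (map F L)) []"
proof (induction L)
  case Nil then show ?case by (simp add: lc_refl)
next
  case (Cons a L) then show ?case using lc_app[of "F a" "[]" "concat (map F L)" "[]"] by simp
qed

lemma lc_concat_app: "R (concat (map (\<lambda>z. F z @ G z) L)) (concat (map F L) @ concat (map G L))"
  by (rule lc_perm) (induction L, auto)

lemma lc_sum_fun:
  assumes add: "\<And>x y. R (f (x+y)) (f x @ f y)" and z: "R (f 0) []"
  shows "R (f (sum_list (map g L))) (concat (map (\<lambda>z. f (g z)) L))"
proof (induction L)
  case Nil then show ?case using z by simp
next
  case (Cons a L)
  then show ?case using add[of "g a" "sum_list (map g L)"] lc_app[OF lc_refl Cons] lc_trans by auto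
qed

lemma t2_lift:
  assumes "tensor_eq2 sM sN xs ys"
  and add1: "\<And>m m' n. R (F (m+m') n) (F m n @ F m' n)"
  and add2: "\<And>m n n'. R (F m (n+n')) (F m n @ F m n')"
  and z1: "\<And>n. R (F 0 n) []" and z2: "\<And>m. R (F m 0) []"
  and bal: "\<And>c m n. R (F (sM c m) n) (F m (sN c n))"
  shows "R (concat (map (\<lambda>(m,n). F m n) xs)) (concat (map (\<lambda>(m,n). F m n) ys))"
  using assms(1)
proof induction
  case (t2_refl xs) then show ?case by (rule lc_refl)
next
  case (t2_sym xs ys) then show ?case using lc_sym by blast
next
  case (t2_trans xs ys zs) then show ?case using lc_trans by blast
next
  case (t2_ctx xs ys us vs) then show ?case using lc_ctx by simp
next
  case (t2_swap a b) then show ?case by (cases a; cases b) (simp add: lc_perm)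
qed (auto simp: add1 add2 z1 z2 bal)

lemma t3_lift:
  assumes "tensor_eq3 sM sN sP xs ys"
  and add1: "\<And>m m' n p. R (F (m+m') n p) (F m n p @ F m' n p)"
  and add2: "\<And>m n n' p. R (F m (n+n') p) (F m n p @ F m n' p)"
  and add3: "\<And>m n p p'. R (F m n (p+p')) (F m n p @ F m n p')"
  and z1: "\<And>n p. R (F 0 n p) []" and z2: "\<And>m p. R (F m 0 p) []" and z3: "\<And>m n. R (F m n 0) []"
  and bal12: "\<And>c m n p. R (F (sM c m) n p) (F m (sN c n) p)"
  and bal23: "\<And>c m n p. R (F m (sN c n) p) (F m n (sP c p))"
  shows "R (concat (map (\<lambda>(m,n,p). F m n p) xs)) (concat (map (\<lambda>(m,n,p). F m n p) ys))"
  using assms(1)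
proof induction
  case (t3_refl xs) then show ?case by (rule lc_refl)
next
  case (t3_sym xs ys) then show ?case using lc_sym by blast
next
  case (t3_trans xs ys zs) then show ?case using lc_trans by blast
next
  case (t3_ctx xs ys us vs) then show ?case using lc_ctx by simp
next
  case (t3_swap a b) then show ?case by (cases a; cases b) (auto simp add: lc_perm)
qed (auto simp: add1 add2 add3 z1 z2 z3 bal12 bal23)

end

lemma lcong_t2: "lcong (tensor_eq2 sM sN)"
  unfolding lcong_def by (auto intro: tensor_eq2.intros)

lemma lcong_t3: "lcong (tensor_eq3 sM sN sP)"
  unfolding lcong_def by (auto intro: tensor_eq3.intros)

lemma lcong_sum: "lcong (\<lambda>X Y. sum_list X = sum_list (Y::'a::ab_group_add list))"
  unfolding lcong_def by (auto simp: add.commute)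


definition bil :: "('o list \<Rightarrow> 'o list \<Rightarrow> bool) \<Rightarrow> ('k::comm_ring_1 \<Rightarrow> 'm::ab_group_add \<Rightarrow> 'm)
   \<Rightarrow> ('k \<Rightarrow> 'n::ab_group_add \<Rightarrow> 'n) \<Rightarrow> ('m \<Rightarrow> 'n \<Rightarrow> 'o list) \<Rightarrow> bool" where
  "bil R sM sN F \<longleftrightarrow> (\<forall>m m' n. R (F (m+m') n) (F m n @ F m' n)) \<and>
     (\<forall>m n n'. R (F m (n+n')) (F m n @ F m n')) \<and> (\<forall>n. R (F 0 n) []) \<and> (\<forall>m. R (F m 0) []) \<and>
     (\<forall>c m n. R (F (sM c m) n) (F m (sN c n)))"

lemma bil_lift:
  assumes "lcong R" "bil R sM sN F" "tensor_eq2 sM sN xs ys"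
  shows "R (concat (map (\<lambda>(m,n). F m n) xs)) (concat (map (\<lambda>(m,n). F m n) ys))"
  apply (rule t2_lift[OF assms(1) assms(3)])
  using assms(2) unfolding bil_def by simp_all

lemma bil_concat:
  assumes R: "lcong R" and b: "\<And>z. z \<in> set Y \<Longrightarrow> bil R sM sN (\<lambda>m n. G m n z)"
  shows "bil R sM sN (\<lambda>m n. concat (map (G m n) Y))"
  unfolding bil_def
proof (intro conjI allI)
  fix m m' n
  have "R (concat (map (G (m+m') n) Y)) (concat (map (\<lambda>z. G m n z @ G m' n z) Y))"
    by (rule lc_concat[OF R]) (use b in \<open>simp add: bil_def\<close>)
  then show "R (concat (map (G (m + m') n) Y)) (concat (map (G m n) Y) @ concat (map (G m' n) Y))"
    using lc_trans[OF R] lc_concat_app[OF R] by blast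
next
  fix m n n'
  have "R (concat (map (G m (n+n')) Y)) (concat (map (\<lambda>z. G m n z @ G m n' z) Y))"
    by (rule lc_concat[OF R]) (use b in \<open>simp add: bil_def\<close>)
  then show "R (concat (map (G m (n+n')) Y)) (concat (map (G m n) Y) @ concat (map (G m n') Y))"
    using lc_trans[OF R] lc_concat_app[OF R] by blast
next
  fix n show "R (concat (map (G 0 n) Y)) []"
    by (rule lc_concat_nil[OF R]) (use b in \<open>simp add: bil_def\<close>)
next
  fix m show "R (concat (map (G m 0) Y)) []"
    by (rule lc_concat_nil[OF R]) (use b in \<open>simp add: bil_def\<close>)
next
  fix c m n show "R (concat (map (G (sM c m) n) Y)) (concat (map (G m (sN c n)) Y))"
    by (rule lc_concat[OF R]) (use b in \<open>simp add: bil_def\<close>)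
qed

lemma bil_pure:
  assumes f: "module_hom sM sX f" and g: "module_hom sN sY g"
  shows "bil (tensor_eq2 sX sY) sM sN (\<lambda>m n. [(f m, g n)])"
  unfolding bil_def using module_hom.add[OF f] module_hom.add[OF g] module_hom.zero[OF f] module_hom.zero[OF g]
    module_hom.scale[OF f] module_hom.scale[OF g]
  by (simp add: t2_addl t2_addr t2_zerol t2_zeror t2_bal)

lemma bil_sum:
  assumes f: "\<And>n. module_hom sM sO (\<lambda>m. f m n)" and g: "\<And>m. module_hom sN sO (f m)"
  shows "bil (\<lambda>X Y. sum_list X = sum_list Y) sM sN (\<lambda>m n. [f m n])"
  unfolding bil_def using module_hom.add[OF f] module_hom.add[OF g] module_hom.zero[OF f] module_hom.zero[OF g]
    module_hom.scale[OF f] module_hom.scale[OF g]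
  by simp

lemma map_as_concat: "map f xs = concat (map (\<lambda>x. [f x]) xs)"
  by (induction xs) auto

lemma t2_map:
  assumes f: "module_hom sM sX f" and g: "module_hom sN sY g" and "tensor_eq2 sM sN xs ys"
  shows "tensor_eq2 sX sY (map (\<lambda>(m,n). (f m, g n)) xs) (map (\<lambda>(m,n). (f m, g n)) ys)"
  using bil_lift[OF lcong_t2 bil_pure[OF f g] assms(3)]
  by (simp add: map_as_concat[of "\<lambda>(m,n). (f m, g n)"] case_prod_unfold)

lemma t2_sum:
  assumes f: "\<And>n. module_hom sM sO (\<lambda>m. f m n)" and g: "\<And>m. module_hom sN sO (f m)"
    and "tensor_eq2 sM sN xs ys"
  shows "sum_list (map (\<lambda>(m,n). f m n) xs) = sum_list (map (\<lambda>(m,n). f m n) ys)"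
  using bil_lift[OF lcong_sum bil_sum[of sM sO f sN, OF f g] assms(3)]
  by (simp add: map_as_concat[of "\<lambda>(m,n). f m n"] case_prod_unfold)


lemma bil_pure_swap:
  assumes f: "module_hom sN sX f" and g: "module_hom sM sY g"
  shows "bil (tensor_eq2 sX sY) sM sN (\<lambda>m n. [(f n, g m)])"
  unfolding bil_def using module_hom.add[OF f] module_hom.add[OF g] module_hom.zero[OF f] module_hom.zero[OF g]
    module_hom.scale[OF f] module_hom.scale[OF g]
  by (simp add: t2_addl t2_addr t2_zerol t2_zeror tensor_eq2.t2_sym[OF t2_bal])

lemma t2_map_swap:
  assumes f: "module_hom sN sX f" and g: "module_hom sM sY g" and "tensor_eq2 sM sN xs ys"
  shows "tensor_eq2 sX sY (map (\<lambda>(m,n). (f n, g m)) xs) (map (\<lambda>(m,n). (f n, g m)) ys)"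
  using bil_lift[OF lcong_t2 bil_pure_swap[OF f g] assms(3)]
  by (simp add: map_as_concat[of "\<lambda>(m,n). (f n, g m)"] case_prod_unfold)

lemma gcollapse2: "tensor_eq2 sX sY (map (\<lambda>z. (P, Q z)) L) [(P, sum_list (map Q L))]"
proof (induction L)
  case Nil then show ?case by (simp add: tensor_eq2.t2_sym[OF t2_zeror])
next
  case (Cons a L)
  have "tensor_eq2 sX sY ([(P, Q a)] @ map (\<lambda>z. (P, Q z)) L) ([(P, Q a)] @ [(P, sum_list (map Q L))])"
    by (rule lc_app[OF lcong_t2 t2_refl Cons])
  moreover have "tensor_eq2 sX sY ([(P, Q a)] @ [(P, sum_list (map Q L))]) [(P, Q a + sum_list (map Q L))]"
    using tensor_eq2.t2_sym[OF t2_addr] by simp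
  ultimately show ?case using tensor_eq2.t2_trans by fastforce
qed

lemma gcollapse1: "tensor_eq2 sX sY (map (\<lambda>z. (P z, Q)) L) [(sum_list (map P L), Q)]"
proof (induction L)
  case Nil then show ?case by (simp add: tensor_eq2.t2_sym[OF t2_zerol])
next
  case (Cons a L)
  have "tensor_eq2 sX sY ([(P a, Q)] @ map (\<lambda>z. (P z, Q)) L) ([(P a, Q)] @ [(sum_list (map P L), Q)])"
    by (rule lc_app[OF lcong_t2 t2_refl Cons])
  moreover have "tensor_eq2 sX sY ([(P a, Q)] @ [(sum_list (map P L), Q)]) [(P a + sum_list (map P L), Q)]"
    using tensor_eq2.t2_sym[OF t2_addl] by simp
  ultimately show ?case using tensor_eq2.t2_trans by fastforce
qed


lemma hom_sum_list:
  assumes "module_hom s1 s2 f"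
  shows "f (sum_list (map g L)) = sum_list (map (\<lambda>x. f (g x)) L)"
  using assms by (induction L) (auto simp: module_hom.add module_hom.zero)

lemma sum_list_concat_map: "sum_list (concat (map f L)) = sum_list (map (\<lambda>x. sum_list (f x)) L)"
  by (induction L) auto

lemma sum_list_concat': "sum_list (concat xss) = sum_list (map sum_list xss)"
  by (induction xss) auto

lemma module_hom_inv:
  assumes "hom_object s f" shows "module_hom s s (inv f)"
  using assms unfolding hom_object_def
  by (auto simp: module_hom_iff bij_is_surj bij_is_inj surj_f_inv_f
      intro!: Hilbert_Choice.inv_f_eq)

lemma hom_object_inv_simps:
  assumes "hom_object s f" shows "f (inv f x) = x" "inv f (f x) = x"
  using assms unfolding hom_object_def by (auto simp: bij_is_surj bij_is_inj surj_f_inv_f)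

lemma (in module) scale_sum_list: "scale c (sum_list (map g L)) = sum_list (map (\<lambda>x. scale c (g x)) L)"
  by (induction L) (auto simp: scale_right_distrib)

lemma (in module) sum_list_scale_left: "scale (sum_list (map f L)) v = sum_list (map (\<lambda>x. scale (f x) v) L)"
  by (induction L) (auto simp: scale_left_distrib)

locale HH =
  fixes sH :: "'k::comm_ring_1 \<Rightarrow> 'h::ab_group_add \<Rightarrow> 'h"
    and mulH :: "'h \<Rightarrow> 'h \<Rightarrow> 'h" and oneH :: 'h
    and \<Delta> :: "'h \<Rightarrow> ('h \<times> 'h) list" and \<epsilon> :: "'h \<Rightarrow> 'k"
    and S :: "'h \<Rightarrow> 'h" and \<alpha> :: "'h \<Rightarrow> 'h"
    and sA :: "'k \<Rightarrow> 'a::ab_group_add \<Rightarrow> 'a"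
    and mulA :: "'a \<Rightarrow> 'a \<Rightarrow> 'a" and oneA :: 'a and \<beta> :: "'a \<Rightarrow> 'a"
    and \<rho>A :: "'a \<Rightarrow> ('a \<times> 'h) list"
    and \<phi> :: "'h \<Rightarrow> 'a"
  assumes H: "monoidal_hom_hopf sH mulH oneH \<Delta> \<epsilon> S \<alpha>"
    and A: "right_hom_comodule_algebra sH mulH oneH \<Delta> \<epsilon> \<alpha> sA mulA oneA \<beta> \<rho>A"
    and phi: "total_integral sH oneH \<Delta> \<alpha> sA oneA \<beta> \<rho>A \<phi>"
    and phi_mult: "\<forall>h g. \<phi> (mulH h g) = mulA (\<phi> h) (\<phi> g)"
begin

lemma Halg: "monoidal_hom_algebra sH mulH oneH \<alpha>" using H unfolding monoidal_hom_hopf_def by blast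
lemma Hcoalg: "monoidal_hom_coalgebra sH \<Delta> \<epsilon> \<alpha>" using H unfolding monoidal_hom_hopf_def by blast
lemma Aalg: "monoidal_hom_algebra sA mulA oneA \<beta>" using A unfolding right_hom_comodule_algebra_def by blast
lemma Acomod: "right_hom_comodule sH \<Delta> \<epsilon> \<alpha> sA \<beta> \<rho>A" using A unfolding right_hom_comodule_algebra_def by blast

lemma hoH: "hom_object sH \<alpha>" using Halg unfolding monoidal_hom_algebra_def by blast
lemma hoA: "hom_object sA \<beta>" using Aalg unfolding monoidal_hom_algebra_def by blast
lemma modH: "module sH" using hoH unfolding hom_object_def by blast
lemma modA: "module sA" using hoA unfolding hom_object_def by blast
lemma alpha_hom: "module_hom sH sH \<alpha>" using hoH unfolding hom_object_def by blast
lemma beta_hom: "module_hom sA sA \<beta>" using hoA unfolding hom_object_def by blast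

lemma mulH_hom1: "module_hom sH sH (mulH a)" and mulH_hom2: "module_hom sH sH (\<lambda>x. mulH x b)"
  using Halg unfolding monoidal_hom_algebra_def k_bilinear_def by blast+
lemma mulA_hom1: "module_hom sA sA (mulA a)" and mulA_hom2: "module_hom sA sA (\<lambda>x. mulA x b)"
  using Aalg unfolding monoidal_hom_algebra_def k_bilinear_def by blast+

lemma alpha_mul: "\<alpha> (mulH a b) = mulH (\<alpha> a) (\<alpha> b)" and alpha_one: "\<alpha> oneH = oneH"
  and assocH: "mulH (\<alpha> a) (mulH b c) = mulH (mulH a b) (\<alpha> c)"
  and unitH1: "mulH a oneH = \<alpha> a" and unitH2: "mulH oneH a = \<alpha> a"
  using Halg unfolding monoidal_hom_algebra_def by blast+
lemma beta_mul: "\<beta> (mulA a b) = mulA (\<beta> a) (\<beta> b)" and beta_one: "\<beta> oneA = oneA"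
  and assocA: "mulA (\<beta> a) (mulA b c) = mulA (mulA a b) (\<beta> c)"
  and unitA1: "mulA a oneA = \<beta> a" and unitA2: "mulA oneA a = \<beta> a"
  using Aalg unfolding monoidal_hom_algebra_def by blast+

lemma D_add: "tensor_eq2 sH sH (\<Delta> (x + y)) (\<Delta> x @ \<Delta> y)"
  and D_scale: "tensor_eq2 sH sH (\<Delta> (sH r x)) (map (\<lambda>(a, b). (sH r a, b)) (\<Delta> x))"
  and eps_hom: "module_hom sH (*) \<epsilon>"
  and D_alpha: "tensor_eq2 sH sH (\<Delta> (\<alpha> c)) (map (\<lambda>(a, b). (\<alpha> a, \<alpha> b)) (\<Delta> c))"
  and eps_alpha: "\<epsilon> (\<alpha> c) = \<epsilon> c"
  and coassoc0: "tensor_eq3 sH sH sH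
            (concat (map (\<lambda>(a, b). map (\<lambda>(x, y). (inv \<alpha> a, x, y)) (\<Delta> b)) (\<Delta> c)))
            (concat (map (\<lambda>(a, b). map (\<lambda>(x, y). (x, y, \<alpha> b)) (\<Delta> a)) (\<Delta> c)))"
  and counitL0: "sum_list (map (\<lambda>(a, b). sH (\<epsilon> a) b) (\<Delta> c)) = inv \<alpha> c"
  and counitR0: "sum_list (map (\<lambda>(a, b). sH (\<epsilon> b) a) (\<Delta> c)) = inv \<alpha> c"
  using Hcoalg unfolding monoidal_hom_coalgebra_def by blast+

lemma D_mul: "tensor_eq2 sH sH (\<Delta> (mulH h g))
        (concat (map (\<lambda>(a, b). map (\<lambda>(c, d). (mulH a c, mulH b d)) (\<Delta> g)) (\<Delta> h)))"
  and D_one: "tensor_eq2 sH sH (\<Delta> oneH) [(oneH, oneH)]"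
  and eps_mul: "\<epsilon> (mulH h g) = \<epsilon> h * \<epsilon> g" and eps_one: "\<epsilon> oneH = 1"
  and S_hom: "module_hom sH sH S"
  and antiL: "sum_list (map (\<lambda>(a, b). mulH (S a) b) (\<Delta> h)) = sH (\<epsilon> h) oneH"
  and antiR: "sum_list (map (\<lambda>(a, b). mulH a (S b)) (\<Delta> h)) = sH (\<epsilon> h) oneH"
  and S_alpha: "S (\<alpha> h) = \<alpha> (S h)"
  using H unfolding monoidal_hom_hopf_def by blast+

lemma rA_add: "tensor_eq2 sA sH (\<rho>A (x + y)) (\<rho>A x @ \<rho>A y)"
  and rA_scale: "tensor_eq2 sA sH (\<rho>A (sA r x)) (map (\<lambda>(a, b). (sA r a, b)) (\<rho>A x))"
  and rA_coassoc: "tensor_eq3 sA sH sH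
            (concat (map (\<lambda>(a, b). map (\<lambda>(x, y). (x, y, inv \<alpha> b)) (\<rho>A a)) (\<rho>A m)))
            (concat (map (\<lambda>(a, b). map (\<lambda>(x, y). (inv \<beta> a, x, y)) (\<Delta> b)) (\<rho>A m)))"
  and rA_counit: "sum_list (map (\<lambda>(a, b). sA (\<epsilon> b) a) (\<rho>A m)) = inv \<beta> m"
  and rA_beta: "tensor_eq2 sA sH (\<rho>A (\<beta> m)) (map (\<lambda>(a, b). (\<beta> a, \<alpha> b)) (\<rho>A m))"
  using Acomod unfolding right_hom_comodule_def by blast+

lemma rA_mul: "tensor_eq2 sA sH (\<rho>A (mulA a b))
        (concat (map (\<lambda>(x, u). map (\<lambda>(y, v). (mulA x y, mulH u v)) (\<rho>A b)) (\<rho>A a)))"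
  and rA_one: "tensor_eq2 sA sH (\<rho>A oneA) [(oneA, oneH)]"
  using A unfolding right_hom_comodule_algebra_def by blast+

lemma phi_hom: "module_hom sH sA \<phi>"
  and phi_comod: "tensor_eq2 sA sH (\<rho>A (\<phi> h)) (map (\<lambda>(a, b). (\<phi> a, b)) (\<Delta> h))"
  and phi_alpha: "\<phi> (\<alpha> h) = \<beta> (\<phi> h)" and phi_one: "\<phi> oneH = oneA"
  using phi unfolding total_integral_def by blast+

lemma phi_mul: "\<phi> (mulH h g) = mulA (\<phi> h) (\<phi> g)" using phi_mult by blast

lemmas H_homs = alpha_hom mulH_hom1 mulH_hom2 S_hom
lemma ainv: "\<alpha> (inv \<alpha> x) = x" "inv \<alpha> (\<alpha> x) = x" using hom_object_inv_simps[OF hoH] by auto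
lemma binv: "\<beta> (inv \<beta> x) = x" "inv \<beta> (\<beta> x) = x" using hom_object_inv_simps[OF hoA] by auto
lemma ainv_hom: "module_hom sH sH (inv \<alpha>)" by (rule module_hom_inv[OF hoH])
lemma binv_hom: "module_hom sA sA (inv \<beta>)" by (rule module_hom_inv[OF hoA])

end

context HH
begin

lemmas sHs = module.scale_left_distrib[OF modH] module.scale_right_distrib[OF modH]
  module.scale_scale[OF modH] module.scale_one[OF modH] module.scale_zero_left[OF modH]
  module.scale_zero_right[OF modH]
lemmas sAs = module.scale_left_distrib[OF modA] module.scale_right_distrib[OF modA]
  module.scale_scale[OF modA] module.scale_one[OF modA] module.scale_zero_left[OF modA]
  module.scale_zero_right[OF modA]

lemma eps_add: "\<epsilon> (x + y) = \<epsilon> x + \<epsilon> y" and eps_sc: "\<epsilon> (sH c x) = c * \<epsilon> x" and eps_0: "\<epsilon> 0 = 0"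
  using eps_hom by (auto simp: module_hom.add module_hom.scale module_hom.zero)

lemma eps_ainv: "\<epsilon> (inv \<alpha> x) = \<epsilon> x" by (metis ainv(1) eps_alpha)

lemma alpha2: "\<alpha> (\<alpha> c) = c"
proof -
  define F where "F = (\<lambda>(p::'h) (q::'h) (r::'h). [sH (\<epsilon> p * \<epsilon> q) r])"
  have 0: "sum_list (concat (map (\<lambda>(m,n,p). F m n p)
            (concat (map (\<lambda>(a, b). map (\<lambda>(x, y). (inv \<alpha> a, x, y)) (\<Delta> b)) (\<Delta> c)))))
      = sum_list (concat (map (\<lambda>(m,n,p). F m n p)
            (concat (map (\<lambda>(a, b). map (\<lambda>(x, y). (x, y, \<alpha> b)) (\<Delta> a)) (\<Delta> c)))))"
    by (rule t3_lift[OF lcong_sum coassoc0]) (auto simp: F_def eps_add eps_sc eps_0 sHs algebra_simps)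
  have 1: "sum_list (concat (map (\<lambda>(m,n,p). F m n p)
            (concat (map (\<lambda>(a, b). map (\<lambda>(x, y). (inv \<alpha> a, x, y)) (\<Delta> b)) (\<Delta> c)))))
     = sum_list (map (\<lambda>(a,b). sH (\<epsilon> a) (sum_list (map (\<lambda>(x,y). sH (\<epsilon> x) y) (\<Delta> b)))) (\<Delta> c))"
    by (simp add: sum_list_concat' sum_list_concat_map map_concat comp_def case_prod_unfold F_def eps_ainv sHs
         module.scale_sum_list[OF modH])
  also have "\<dots> = sum_list (map (\<lambda>(a,b). inv \<alpha> (sH (\<epsilon> a) b)) (\<Delta> c))"
    by (simp add: counitL0[unfolded case_prod_unfold] case_prod_unfold module_hom.scale[OF ainv_hom])
  also have "\<dots> = inv \<alpha> (inv \<alpha> c)"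
    by (simp add: counitL0[unfolded case_prod_unfold] hom_sum_list[OF ainv_hom, symmetric] case_prod_unfold)
  finally have 1: "sum_list (concat (map (\<lambda>(m,n,p). F m n p)
            (concat (map (\<lambda>(a, b). map (\<lambda>(x, y). (inv \<alpha> a, x, y)) (\<Delta> b)) (\<Delta> c))))) = inv \<alpha> (inv \<alpha> c)" .
  have 2: "sum_list (concat (map (\<lambda>(m,n,p). F m n p)
            (concat (map (\<lambda>(a, b). map (\<lambda>(x, y). (x, y, \<alpha> b)) (\<Delta> a)) (\<Delta> c)))))
     = sum_list (map (\<lambda>(a,b). sH (sum_list (map (\<lambda>(x,y). \<epsilon> x * \<epsilon> y) (\<Delta> a))) (\<alpha> b)) (\<Delta> c))"
    by (simp add: sum_list_concat' sum_list_concat_map map_concat comp_def case_prod_unfold F_def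
         module.sum_list_scale_left[OF modH])
  also have "\<dots> = sum_list (map (\<lambda>(a,b). sH (\<epsilon> a) (\<alpha> b)) (\<Delta> c))"
  proof -
    have "sum_list (map (\<lambda>(x,y). \<epsilon> x * \<epsilon> y) (\<Delta> a)) = \<epsilon> a" for a
    proof -
      have "\<epsilon> (sum_list (map (\<lambda>(x, y). sH (\<epsilon> x) y) (\<Delta> a))) = \<epsilon> (inv \<alpha> a)" by (simp add: counitL0)
      then show ?thesis by (simp add: hom_sum_list[OF eps_hom] case_prod_unfold eps_sc eps_ainv)
    qed
    then show ?thesis by simp
  qed
  also have "\<dots> = \<alpha> (inv \<alpha> c)"
    by (simp add: counitL0[unfolded case_prod_unfold, symmetric] hom_sum_list[OF alpha_hom] case_prod_unfold module_hom.scale[OF alpha_hom])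
  finally have 2: "sum_list (concat (map (\<lambda>(m,n,p). F m n p)
            (concat (map (\<lambda>(a, b). map (\<lambda>(x, y). (x, y, \<alpha> b)) (\<Delta> a)) (\<Delta> c))))) = c"
    by (simp add: ainv)
  from 0 1 2 have "inv \<alpha> (inv \<alpha> c) = c" by simp
  then show ?thesis by (metis ainv(1))
qed

end

context HH
begin

lemma ainv_eq: "inv \<alpha> = \<alpha>"
proof
  fix x show "inv \<alpha> x = \<alpha> x" by (metis ainv(1) alpha2)
qed

abbreviation "T2 \<equiv> tensor_eq2 sH sH"

lemma T2: "lcong T2" by (rule lcong_t2)
lemmas T2_refl = lc_refl[OF T2] and T2_sym = lc_sym[OF T2] and T2_trans = lc_trans[OF T2]
  and T2_app = lc_app[OF T2] and T2_concat = lc_concat[OF T2] and T2_perm = lc_perm[OF T2]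

declare T2_trans[trans]

definition m2 :: "('h \<times> 'h) list \<Rightarrow> ('h \<times> 'h) list \<Rightarrow> ('h \<times> 'h) list" where
  "m2 X Y = concat (map (\<lambda>(a,b). map (\<lambda>(c,d). (mulH a c, mulH b d)) Y) X)"
definition mapa :: "('h \<times> 'h) list \<Rightarrow> ('h \<times> 'h) list" where
  "mapa X = map (\<lambda>(a,b). (\<alpha> a, \<alpha> b)) X"
definition scl :: "'k \<Rightarrow> ('h \<times> 'h) list \<Rightarrow> ('h \<times> 'h) list" where
  "scl c X = map (\<lambda>(a,b). (sH c a, b)) X"

lemma concat_concat: "concat (concat xss) = concat (map concat xss)"
  by (induction xss) auto

lemma m2_Nil1[simp]: "m2 [] Y = []" and m2_Nil2[simp]: "m2 X [] = []"
  by (induction X) (auto simp: m2_def)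
lemma m2_app1: "m2 (X@X') Y = m2 X Y @ m2 X' Y" by (simp add: m2_def)
lemma m2_Cons1: "m2 (x#X) Y = map (\<lambda>(c,d). (mulH (fst x) c, mulH (snd x) d)) Y @ m2 X Y"
  by (simp add: m2_def case_prod_unfold)
lemma m2_concat1: "m2 (concat (map F L)) Y = concat (map (\<lambda>z. m2 (F z) Y) L)"
  by (induction L) (auto simp: m2_app1)

lemma m2_app2: "T2 (m2 X (Y@Y')) (m2 X Y @ m2 X Y')"
proof (induction X)
  case Nil then show ?case by (simp add: T2_refl)
next
  case (Cons x X)
  let ?f = "\<lambda>(c,d). (mulH (fst x) c, mulH (snd x) d)"
  have "T2 (m2 (x#X) (Y@Y')) ((map ?f Y @ map ?f Y') @ (m2 X Y @ m2 X Y'))"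
    unfolding m2_Cons1 map_append by (rule T2_app[OF T2_refl Cons])
  also have "T2 \<dots> (m2 (x#X) Y @ m2 (x#X) Y')"
    unfolding m2_Cons1 by (rule T2_perm) simp
  finally show ?case .
qed

lemma m2_concat2: "T2 (m2 X (concat (map F L))) (concat (map (\<lambda>z. m2 X (F z)) L))"
proof (induction L)
  case Nil then show ?case by (simp add: T2_refl)
next
  case (Cons a L)
  then show ?case using m2_app2 T2_app[OF T2_refl Cons] T2_trans by fastforce
qed

lemma m2_resp2: "T2 Y Y' \<Longrightarrow> T2 (m2 X Y) (m2 X Y')"
  unfolding m2_def
proof (rule T2_concat)
  fix z assume "T2 Y Y'"
  then show "T2 ((\<lambda>(a, b). map (\<lambda>(c, d). (mulH a c, mulH b d)) Y) z)
                ((\<lambda>(a, b). map (\<lambda>(c, d). (mulH a c, mulH b d)) Y') z)"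
    by (cases z) (simp add: t2_map[OF mulH_hom1 mulH_hom1])
qed

lemma m2_bil1: "bil T2 sH sH (\<lambda>a b. map (\<lambda>(c,d). (mulH a c, mulH b d)) Y)"
  unfolding map_as_concat[of "\<lambda>(c,d). (mulH _ c, mulH _ d)"]
  by (rule bil_concat[OF T2]) (auto simp: case_prod_unfold intro!: bil_pure mulH_hom2)

lemma m2_resp1: "T2 X X' \<Longrightarrow> T2 (m2 X Y) (m2 X' Y)"
  unfolding m2_def using bil_lift[OF T2 m2_bil1] by simp

lemma m2_resp: "T2 X X' \<Longrightarrow> T2 Y Y' \<Longrightarrow> T2 (m2 X Y) (m2 X' Y')"
  using m2_resp1 m2_resp2 T2_trans by blast

lemma m2_assoc: "m2 (mapa X) (m2 Y Z) = m2 (m2 X Y) (mapa Z)"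
  by (simp add: m2_def mapa_def map_concat case_prod_unfold assocH comp_def concat_concat)


lemmas alpha_lin = module_hom.add[OF alpha_hom] module_hom.scale[OF alpha_hom] module_hom.zero[OF alpha_hom]
lemmas S_lin = module_hom.add[OF S_hom] module_hom.scale[OF S_hom] module_hom.zero[OF S_hom]
lemmas mulH1_lin = module_hom.add[OF mulH_hom1] module_hom.scale[OF mulH_hom1] module_hom.zero[OF mulH_hom1]
lemmas mulH2_lin = module_hom.add[OF mulH_hom2] module_hom.scale[OF mulH_hom2] module_hom.zero[OF mulH_hom2]
lemmas idH_hom = module.module_hom_ident[OF modH]
lemmas scH_hom = module.module_hom_scale_self[OF modH]

lemma mapa_resp: "T2 X Y \<Longrightarrow> T2 (mapa X) (mapa Y)"
  unfolding mapa_def by (rule t2_map[OF alpha_hom alpha_hom])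
lemma mapa_mapa[simp]: "mapa (mapa X) = X"
  by (induction X) (auto simp: mapa_def alpha2)
lemma mapa_app: "mapa (X @ Y) = mapa X @ mapa Y" by (simp add: mapa_def)
lemma mapa_concat: "mapa (concat (map F L)) = concat (map (\<lambda>z. mapa (F z)) L)"
  by (simp add: mapa_def map_concat comp_def)
lemma m2_unit1: "m2 [(oneH,oneH)] Y = mapa Y"
  by (simp add: m2_def mapa_def unitH2)
lemma m2_unit2: "m2 X [(oneH,oneH)] = mapa X"
  by (induction X) (auto simp: m2_def mapa_def unitH1)
lemma mapa_m2: "mapa (m2 X Y) = m2 (mapa X) (mapa Y)"
  by (simp add: m2_def mapa_def map_concat case_prod_unfold alpha_mul comp_def)

lemma scl_resp: "T2 X Y \<Longrightarrow> T2 (scl c X) (scl c Y)"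
  unfolding scl_def by (rule t2_map[OF scH_hom idH_hom])
lemma scl_app: "scl c (X @ Y) = scl c X @ scl c Y" by (simp add: scl_def)
lemma scl_concat: "scl c (concat (map F L)) = concat (map (\<lambda>z. scl c (F z)) L)"
  by (simp add: scl_def map_concat comp_def)
lemma scl_m2_1: "m2 (scl c X) Y = scl c (m2 X Y)"
  by (simp add: m2_def scl_def map_concat case_prod_unfold mulH2_lin comp_def)
lemma scl_m2_2: "m2 X (scl c Y) = scl c (m2 X Y)"
  by (simp add: m2_def scl_def map_concat case_prod_unfold mulH1_lin comp_def)
lemma scl_mapa: "scl c (mapa X) = mapa (scl c X)"
  by (simp add: scl_def mapa_def case_prod_unfold alpha_lin)
lemma scl_scl: "scl c (scl d X) = scl (c * d) X"
  by (simp add: scl_def case_prod_unfold sHs)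
lemma scl_one: "scl 1 X = X"
  by (simp add: scl_def case_prod_unfold sHs)
lemma scl0: "T2 (scl 0 X) []"
  unfolding scl_def map_as_concat[of "\<lambda>(a, b). (sH 0 a, b)"]
  by (rule lc_concat_nil[OF T2]) (auto simp: sHs t2_zerol)

definition good :: "('h \<Rightarrow> ('h \<times> 'h) list) \<Rightarrow> bool" where
  "good f \<longleftrightarrow> (\<forall>x y. T2 (f (x+y)) (f x @ f y)) \<and> (\<forall>c x. T2 (f (sH c x)) (scl c (f x)))
     \<and> (\<forall>x. T2 (f (\<alpha> x)) (mapa (f x)))"

lemma good_add: "good f \<Longrightarrow> T2 (f (x+y)) (f x @ f y)" by (simp add: good_def)
lemma good_sc: "good f \<Longrightarrow> T2 (f (sH c x)) (scl c (f x))" by (simp add: good_def)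
lemma good_alpha: "good f \<Longrightarrow> T2 (f (\<alpha> x)) (mapa (f x))" by (simp add: good_def)
lemma good_zero: "good f \<Longrightarrow> T2 (f 0) []"
proof -
  assume f: "good f"
  have "sH 0 0 = (0::'h)" by (simp add: sHs)
  then show ?thesis using T2_trans[OF good_sc[OF f, of 0 0] scl0[of "f 0"]] by simp
qed
lemma good_sum: "good f \<Longrightarrow> T2 (f (sum_list (map g L))) (concat (map (\<lambda>z. f (g z)) L))"
  by (rule lc_sum_fun[OF T2]) (auto simp: good_add good_zero)

definition conv :: "('h \<Rightarrow> ('h \<times> 'h) list) \<Rightarrow> ('h \<Rightarrow> ('h \<times> 'h) list) \<Rightarrow> 'h \<Rightarrow> ('h \<times> 'h) list" where
  "conv f g h = concat (map (\<lambda>(a,b). m2 (f a) (g b)) (\<Delta> h))"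

lemma conv_resp:
  assumes "\<And>x. T2 (f x) (f' x)" "\<And>x. T2 (g x) (g' x)"
  shows "T2 (conv f g h) (conv f' g' h)"
  unfolding conv_def by (rule T2_concat) (auto simp: assms m2_resp)

definition U :: "'h \<Rightarrow> ('h \<times> 'h) list" where
  "U h = [(sH (\<epsilon> h) oneH, oneH)]"

lemma U_scl: "U h = scl (\<epsilon> h) [(oneH, oneH)]" by (simp add: U_def scl_def)

lemma conv_unit_right:
  assumes f: "good f" shows "T2 (conv f U h) (f h)"
proof -
  have "conv f U h = concat (map (\<lambda>(a,b). mapa (scl (\<epsilon> b) (f a))) (\<Delta> h))"
    unfolding conv_def U_scl scl_m2_2 m2_unit2 scl_mapa ..
  also have "T2 \<dots> (concat (map (\<lambda>(a,b). f (\<alpha> (sH (\<epsilon> b) a))) (\<Delta> h)))"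
  proof (rule T2_concat)
    fix z :: "'h \<times> 'h"
    obtain a b where z: "z = (a,b)" by (cases z)
    have 1: "T2 (f (\<alpha> (sH (\<epsilon> b) a))) (mapa (f (sH (\<epsilon> b) a)))" by (rule good_alpha[OF f])
    have 2: "T2 (mapa (f (sH (\<epsilon> b) a))) (mapa (scl (\<epsilon> b) (f a)))" by (rule mapa_resp[OF good_sc[OF f]])
    show "T2 ((\<lambda>(a,b). mapa (scl (\<epsilon> b) (f a))) z) ((\<lambda>(a,b). f (\<alpha> (sH (\<epsilon> b) a))) z)"
      unfolding z using T2_sym[OF T2_trans[OF 1 2]] by simp
  qed
  also have "T2 \<dots> (f (sum_list (map (\<lambda>(a,b). \<alpha> (sH (\<epsilon> b) a)) (\<Delta> h))))"
    using T2_sym[OF good_sum[OF f, of "\<lambda>(a,b). \<alpha> (sH (\<epsilon> b) a)" "\<Delta> h"]]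
    by (simp add: case_prod_unfold)
  also have "sum_list (map (\<lambda>(a,b). \<alpha> (sH (\<epsilon> b) a)) (\<Delta> h)) = h"
    using hom_sum_list[OF alpha_hom, of "\<lambda>(a,b). sH (\<epsilon> b) a" "\<Delta> h"] counitR0[of h]
    by (simp add: case_prod_unfold ainv)
  finally show ?thesis by simp
qed

lemma conv_unit_left:
  assumes g: "good g" shows "T2 (conv U g h) (g h)"
proof -
  have "conv U g h = concat (map (\<lambda>(a,b). mapa (scl (\<epsilon> a) (g b))) (\<Delta> h))"
    unfolding conv_def U_scl scl_m2_1 m2_unit1 scl_mapa ..
  also have "T2 \<dots> (concat (map (\<lambda>(a,b). g (\<alpha> (sH (\<epsilon> a) b))) (\<Delta> h)))"
  proof (rule T2_concat)
    fix z :: "'h \<times> 'h"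
    obtain a b where z: "z = (a,b)" by (cases z)
    have 1: "T2 (g (\<alpha> (sH (\<epsilon> a) b))) (mapa (g (sH (\<epsilon> a) b)))" by (rule good_alpha[OF g])
    have 2: "T2 (mapa (g (sH (\<epsilon> a) b))) (mapa (scl (\<epsilon> a) (g b)))" by (rule mapa_resp[OF good_sc[OF g]])
    show "T2 ((\<lambda>(a,b). mapa (scl (\<epsilon> a) (g b))) z) ((\<lambda>(a,b). g (\<alpha> (sH (\<epsilon> a) b))) z)"
      unfolding z using T2_sym[OF T2_trans[OF 1 2]] by simp
  qed
  also have "T2 \<dots> (g (sum_list (map (\<lambda>(a,b). \<alpha> (sH (\<epsilon> a) b)) (\<Delta> h))))"
    using T2_sym[OF good_sum[OF g, of "\<lambda>(a,b). \<alpha> (sH (\<epsilon> a) b)" "\<Delta> h"]]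
    by (simp add: case_prod_unfold)
  also have "sum_list (map (\<lambda>(a,b). \<alpha> (sH (\<epsilon> a) b)) (\<Delta> h)) = h"
    using hom_sum_list[OF alpha_hom, of "\<lambda>(a,b). sH (\<epsilon> a) b" "\<Delta> h"] counitL0[of h]
    by (simp add: case_prod_unfold ainv)
  finally show ?thesis by simp
qed


abbreviation "T3 \<equiv> tensor_eq3 sH sH sH"

lemma coassoc: "T3 (concat (map (\<lambda>(a, b). map (\<lambda>(x, y). (\<alpha> a, x, y)) (\<Delta> b)) (\<Delta> c)))
            (concat (map (\<lambda>(a, b). map (\<lambda>(x, y). (x, y, \<alpha> b)) (\<Delta> a)) (\<Delta> c)))"
  using coassoc0[of c] by (simp add: ainv_eq)

lemma alpha_add': "\<alpha> (x + y) = \<alpha> x + \<alpha> y" by (simp add: alpha_lin)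
lemma alpha_sc': "\<alpha> (sH c x) = sH c (\<alpha> x)" by (simp add: alpha_lin)
lemma alpha_0': "\<alpha> 0 = 0" by (simp add: alpha_lin)

lemma conv_assoc:
  assumes f: "good f" and g: "good g" and k: "good k"
  shows "T2 (conv f (conv g k) h) (conv (conv f g) k h)"
proof -
  define \<Phi> where "\<Phi> = (\<lambda>x y z. m2 (f (\<alpha> x)) (m2 (g y) (k z)))"
  have "T2 (conv f (conv g k) h)
     (concat (map (\<lambda>(a,b). concat (map (\<lambda>(c,d). m2 (f a) (m2 (g c) (k d))) (\<Delta> b))) (\<Delta> h)))"
    unfolding conv_def
  proof (rule T2_concat)
    fix z :: "'h \<times> 'h"
    obtain a b where z: "z = (a,b)" by (cases z)
    show "T2 ((\<lambda>(a, b). m2 (f a) (concat (map (\<lambda>(a, b). m2 (g a) (k b)) (\<Delta> b)))) z)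
          ((\<lambda>(a, b). concat (map (\<lambda>(c, d). m2 (f a) (m2 (g c) (k d))) (\<Delta> b))) z)"
      unfolding z using m2_concat2[of "f a" "\<lambda>(a, b). m2 (g a) (k b)" "\<Delta> b"]
      by (simp add: case_prod_unfold)
  qed
  also have "concat (map (\<lambda>(a,b). concat (map (\<lambda>(c,d). m2 (f a) (m2 (g c) (k d))) (\<Delta> b))) (\<Delta> h))
     = concat (map (\<lambda>(x,y,z). \<Phi> x y z) (concat (map (\<lambda>(a, b). map (\<lambda>(x, y). (\<alpha> a, x, y)) (\<Delta> b)) (\<Delta> h))))"
    by (simp add: \<Phi>_def map_concat concat_concat comp_def case_prod_unfold alpha2)
  also have "T2 \<dots> (concat (map (\<lambda>(x,y,z). \<Phi> x y z) (concat (map (\<lambda>(a, b). map (\<lambda>(x, y). (x, y, \<alpha> b)) (\<Delta> a)) (\<Delta> h)))))"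
  proof (rule t3_lift[OF T2 coassoc])
    fix x x' y z
    have "T2 (\<Phi> (x+x') y z) (m2 (f (\<alpha> x) @ f (\<alpha> x')) (m2 (g y) (k z)))"
      unfolding \<Phi>_def alpha_add' by (rule m2_resp1[OF good_add[OF f]])
    then show "T2 (\<Phi> (x+x') y z) (\<Phi> x y z @ \<Phi> x' y z)" by (simp add: \<Phi>_def m2_app1)
  next
    fix x y y' z
    have "T2 (m2 (g (y+y')) (k z)) (m2 (g y) (k z) @ m2 (g y') (k z))"
      using m2_resp1[OF good_add[OF g]] by (simp add: m2_app1)
    then have "T2 (\<Phi> x (y+y') z) (m2 (f (\<alpha> x)) (m2 (g y) (k z) @ m2 (g y') (k z)))"
      unfolding \<Phi>_def by (rule m2_resp2)
    also have "T2 \<dots> (\<Phi> x y z @ \<Phi> x y' z)" unfolding \<Phi>_def by (rule m2_app2)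
    finally show "T2 (\<Phi> x (y+y') z) (\<Phi> x y z @ \<Phi> x y' z)" .
  next
    fix x y z z'
    have "T2 (m2 (g y) (k (z+z'))) (m2 (g y) (k z) @ m2 (g y) (k z'))"
      using T2_trans[OF m2_resp2[OF good_add[OF k]] m2_app2] .
    then have "T2 (\<Phi> x y (z+z')) (m2 (f (\<alpha> x)) (m2 (g y) (k z) @ m2 (g y) (k z')))"
      unfolding \<Phi>_def by (rule m2_resp2)
    also have "T2 \<dots> (\<Phi> x y z @ \<Phi> x y z')" unfolding \<Phi>_def by (rule m2_app2)
    finally show "T2 (\<Phi> x y (z+z')) (\<Phi> x y z @ \<Phi> x y z')" .
  next
    fix y z show "T2 (\<Phi> 0 y z) []"
      unfolding \<Phi>_def alpha_0' using m2_resp1[OF good_zero[OF f]] by simp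
  next
    fix x z
    have "T2 (m2 (g 0) (k z)) []" using m2_resp1[OF good_zero[OF g]] by simp
    then show "T2 (\<Phi> x 0 z) []" unfolding \<Phi>_def using m2_resp2 by fastforce
  next
    fix x y
    have "T2 (m2 (g y) (k 0)) []" using m2_resp2[OF good_zero[OF k]] by simp
    then show "T2 (\<Phi> x y 0) []" unfolding \<Phi>_def using m2_resp2 by fastforce
  next
    fix c x y z
    have 1: "T2 (\<Phi> (sH c x) y z) (scl c (\<Phi> x y z))"
      unfolding \<Phi>_def alpha_sc' using m2_resp1[OF good_sc[OF f]] by (simp add: scl_m2_1)
    have "T2 (m2 (g (sH c y)) (k z)) (scl c (m2 (g y) (k z)))"
      using m2_resp1[OF good_sc[OF g]] by (simp add: scl_m2_1)
    then have 2: "T2 (\<Phi> x (sH c y) z) (scl c (\<Phi> x y z))"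
      unfolding \<Phi>_def using m2_resp2 by (fastforce simp: scl_m2_2)
    show "T2 (\<Phi> (sH c x) y z) (\<Phi> x (sH c y) z)" using T2_trans[OF 1 T2_sym[OF 2]] .
  next
    fix c x y z
    have "T2 (m2 (g (sH c y)) (k z)) (scl c (m2 (g y) (k z)))"
      using m2_resp1[OF good_sc[OF g]] by (simp add: scl_m2_1)
    then have 1: "T2 (\<Phi> x (sH c y) z) (scl c (\<Phi> x y z))"
      unfolding \<Phi>_def using m2_resp2 by (fastforce simp: scl_m2_2)
    have "T2 (m2 (g y) (k (sH c z))) (scl c (m2 (g y) (k z)))"
      using m2_resp2[OF good_sc[OF k]] by (simp add: scl_m2_2)
    then have 2: "T2 (\<Phi> x y (sH c z)) (scl c (\<Phi> x y z))"
      unfolding \<Phi>_def using m2_resp2 by (fastforce simp: scl_m2_2)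
    show "T2 (\<Phi> x (sH c y) z) (\<Phi> x y (sH c z))" using T2_trans[OF 1 T2_sym[OF 2]] .
  qed
  also have "concat (map (\<lambda>(x,y,z). \<Phi> x y z) (concat (map (\<lambda>(a, b). map (\<lambda>(x, y). (x, y, \<alpha> b)) (\<Delta> a)) (\<Delta> h))))
    = concat (map (\<lambda>(a,b). concat (map (\<lambda>(x,y). m2 (f (\<alpha> x)) (m2 (g y) (k (\<alpha> b)))) (\<Delta> a))) (\<Delta> h))"
    by (simp add: \<Phi>_def map_concat concat_concat comp_def case_prod_unfold)
  also have "T2 \<dots> (concat (map (\<lambda>(a,b). concat (map (\<lambda>(x,y). m2 (m2 (f x) (g y)) (k b)) (\<Delta> a))) (\<Delta> h)))"
  proof (rule T2_concat)
    fix z :: "'h \<times> 'h"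
    obtain a b where z: "z = (a,b)" by (cases z)
    have "T2 (concat (map (\<lambda>(x,y). m2 (f (\<alpha> x)) (m2 (g y) (k (\<alpha> b)))) (\<Delta> a)))
              (concat (map (\<lambda>(x,y). m2 (m2 (f x) (g y)) (k b)) (\<Delta> a)))"
    proof (rule T2_concat)
      fix w :: "'h \<times> 'h"
      obtain x y where w: "w = (x,y)" by (cases w)
      have "T2 (m2 (f (\<alpha> x)) (m2 (g y) (k (\<alpha> b)))) (m2 (mapa (f x)) (m2 (g y) (mapa (k b))))"
        by (rule m2_resp[OF good_alpha[OF f] m2_resp2[OF good_alpha[OF k]]])
      also have "m2 (mapa (f x)) (m2 (g y) (mapa (k b))) = m2 (m2 (f x) (g y)) (k b)"
        by (simp add: m2_assoc)
      finally show "T2 ((\<lambda>(x,y). m2 (f (\<alpha> x)) (m2 (g y) (k (\<alpha> b)))) w) ((\<lambda>(x,y). m2 (m2 (f x) (g y)) (k b)) w)"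
        by (simp add: w)
    qed
    then show "T2 ((\<lambda>(a,b). concat (map (\<lambda>(x,y). m2 (f (\<alpha> x)) (m2 (g y) (k (\<alpha> b)))) (\<Delta> a))) z)
        ((\<lambda>(a,b). concat (map (\<lambda>(x,y). m2 (m2 (f x) (g y)) (k b)) (\<Delta> a))) z)" by (simp add: z)
  qed
  also have "concat (map (\<lambda>(a,b). concat (map (\<lambda>(x,y). m2 (m2 (f x) (g y)) (k b)) (\<Delta> a))) (\<Delta> h))
     = conv (conv f g) k h"
    by (simp add: conv_def m2_concat1 case_prod_unfold)
  finally show ?thesis .
qed

end

context HH
begin

lemma good_D: "good \<Delta>"
  unfolding good_def scl_def mapa_def using D_add D_scale D_alpha by blast

lemma good_U: "good U"
  unfolding good_def
proof (intro conjI allI)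
  fix x y show "T2 (U (x + y)) (U x @ U y)"
    by (simp add: U_def eps_add sHs t2_addl)
next
  fix c x show "T2 (U (sH c x)) (scl c (U x))"
    by (simp add: U_def scl_def eps_sc sHs T2_refl)
next
  fix x show "T2 (U (\<alpha> x)) (mapa (U x))"
    by (simp add: U_def mapa_def eps_alpha alpha_lin alpha_one T2_refl)
qed

definition FS :: "'h \<Rightarrow> ('h \<times> 'h) list" where "FS h = \<Delta> (S h)"
definition flipS :: "('h \<times> 'h) list \<Rightarrow> ('h \<times> 'h) list" where "flipS X = map (\<lambda>(a,b). (S b, S a)) X"
definition GS :: "'h \<Rightarrow> ('h \<times> 'h) list" where "GS h = flipS (\<Delta> h)"

lemma good_FS: "good FS"
  unfolding good_def FS_def using good_D unfolding good_def by (simp add: S_lin S_alpha)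

lemma flipS_bil: "bil T2 sH sH (\<lambda>a b. [(S b, S a)])"
  unfolding bil_def by (simp add: S_lin t2_addl t2_addr t2_zerol t2_zeror T2_sym[OF t2_bal])

lemma flipS_resp: "T2 X Y \<Longrightarrow> T2 (flipS X) (flipS Y)"
  using bil_lift[OF T2 flipS_bil] unfolding flipS_def map_as_concat[of "\<lambda>(a, b). (S b, S a)"]
  by (simp add: case_prod_unfold)

lemma flipS_app: "flipS (X @ Y) = flipS X @ flipS Y" by (simp add: flipS_def)

lemma flipS_scl: "T2 (flipS (scl c X)) (scl c (flipS X))"
proof (induction X)
  case Nil then show ?case by (simp add: flipS_def scl_def T2_refl)
next
  case (Cons x X)
  obtain a b where x: "x = (a,b)" by (cases x)
  have "T2 ([(S b, S (sH c a))] @ flipS (scl c X)) ([(sH c (S b), S a)] @ scl c (flipS X))"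
    by (rule T2_app[OF _ Cons]) (simp add: S_lin T2_sym[OF t2_bal])
  then show ?case by (simp add: x flipS_def scl_def)
qed

lemma flipS_mapa: "flipS (mapa X) = mapa (flipS X)"
  by (simp add: flipS_def mapa_def case_prod_unfold S_alpha)

lemma good_GS: "good GS"
  unfolding good_def GS_def
proof (intro conjI allI)
  fix x y show "T2 (flipS (\<Delta> (x + y))) (flipS (\<Delta> x) @ flipS (\<Delta> y))"
    using flipS_resp[OF D_add] by (simp add: flipS_app)
next
  fix c x show "T2 (flipS (\<Delta> (sH c x))) (scl c (flipS (\<Delta> x)))"
    using T2_trans[OF flipS_resp[OF good_sc[OF good_D]] flipS_scl] .
next
  fix x show "T2 (flipS (\<Delta> (\<alpha> x))) (mapa (flipS (\<Delta> x)))"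
    using flipS_resp[OF good_alpha[OF good_D]] by (simp add: flipS_mapa)
qed

lemma m2_D: "m2 (\<Delta> h) (\<Delta> g) = concat (map (\<lambda>(a, b). map (\<lambda>(c, d). (mulH a c, mulH b d)) (\<Delta> g)) (\<Delta> h))"
  by (simp add: m2_def)

lemma FS_inv: "T2 (conv FS \<Delta> h) (U h)"
proof -
  have "T2 (conv FS \<Delta> h) (concat (map (\<lambda>(a,b). \<Delta> (mulH (S a) b)) (\<Delta> h)))"
    unfolding conv_def FS_def
    by (rule T2_concat) (auto simp: m2_D intro: T2_sym[OF D_mul])
  also have "T2 \<dots> (\<Delta> (sum_list (map (\<lambda>(a,b). mulH (S a) b) (\<Delta> h))))"
    using T2_sym[OF good_sum[OF good_D, of "\<lambda>(a,b). mulH (S a) b" "\<Delta> h"]] by (simp add: case_prod_unfold)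
  also have "\<Delta> (sum_list (map (\<lambda>(a,b). mulH (S a) b) (\<Delta> h))) = \<Delta> (sH (\<epsilon> h) oneH)" by (simp add: antiL)
  also have "T2 \<dots> (scl (\<epsilon> h) (\<Delta> oneH))" by (rule good_sc[OF good_D])
  also have "T2 \<dots> (scl (\<epsilon> h) [(oneH,oneH)])" by (rule scl_resp[OF D_one])
  also have "scl (\<epsilon> h) [(oneH,oneH)] = U h" by (simp add: U_scl)
  finally show ?thesis .
qed


lemma collapse2: "T2 (map (\<lambda>z. (P, Q z)) L) [(P, sum_list (map Q L))]"
proof (induction L)
  case Nil then show ?case by (simp add: T2_sym[OF t2_zeror])
next
  case (Cons a L)
  have "T2 ([(P, Q a)] @ map (\<lambda>z. (P, Q z)) L) ([(P, Q a)] @ [(P, sum_list (map Q L))])"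
    by (rule T2_app[OF T2_refl Cons])
  also have "T2 \<dots> [(P, Q a + sum_list (map Q L))]" using T2_sym[OF t2_addr] by simp
  finally show ?case by simp
qed

lemma collapse1: "T2 (map (\<lambda>z. (P z, Q)) L) [(sum_list (map P L), Q)]"
proof (induction L)
  case Nil then show ?case by (simp add: T2_sym[OF t2_zerol])
next
  case (Cons a L)
  have "T2 ([(P a, Q)] @ map (\<lambda>z. (P z, Q)) L) ([(P a, Q)] @ [(sum_list (map P L), Q)])"
    by (rule T2_app[OF T2_refl Cons])
  also have "T2 \<dots> [(P a + sum_list (map P L), Q)]" using T2_sym[OF t2_addl] by simp
  finally show ?case by simp
qed

lemma m2_single: "m2 [(a,b)] Y = map (\<lambda>(c,d). (mulH a c, mulH b d)) Y"
  by (simp add: m2_def)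

lemma m2_split1: "m2 X Y = concat (map (\<lambda>(x,y). m2 [(x,y)] Y) X)"
  by (simp add: m2_def)

lemma m2s_bil: "bil T2 sH sH (\<lambda>a b. m2 [(a,b)] Y)"
  unfolding m2_single by (rule m2_bil1)

lemma good_alpha_comp:
  assumes g: "good g" shows "good (\<lambda>z. g (\<alpha> z))"
  unfolding good_def
proof (intro conjI allI)
  fix x y
  show "T2 (g (\<alpha> (x + y))) (g (\<alpha> x) @ g (\<alpha> y))" using good_add[OF g] by (simp add: alpha_add')
next
  fix c x
  show "T2 (g (\<alpha> (sH c x))) (scl c (g (\<alpha> x)))" using good_sc[OF g] by (simp add: alpha_sc')
next
  fix x
  have "T2 (mapa (g (\<alpha> x))) (mapa (mapa (g x)))" by (rule mapa_resp[OF good_alpha[OF g]])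
  then show "T2 (g (\<alpha> (\<alpha> x))) (mapa (g (\<alpha> x)))" by (simp add: alpha2 T2_sym)
qed

lemma psi_lift:
  assumes g: "good g" and L: "T3 L L'"
  shows "T2 (concat (map (\<lambda>(x,y,z). m2 [(x,y)] (g z)) L)) (concat (map (\<lambda>(x,y,z). m2 [(x,y)] (g z)) L'))"
proof (rule t3_lift[OF T2 L])
  have b: "bil T2 sH sH (\<lambda>a b. m2 [(a,b)] Y)" for Y by (rule m2s_bil)
  fix x x' y z show "T2 (m2 [(x + x', y)] (g z)) (m2 [(x, y)] (g z) @ m2 [(x', y)] (g z))"
    using b unfolding bil_def by blast
next
  have b: "bil T2 sH sH (\<lambda>a b. m2 [(a,b)] Y)" for Y by (rule m2s_bil)
  fix x y y' z show "T2 (m2 [(x, y + y')] (g z)) (m2 [(x, y)] (g z) @ m2 [(x, y')] (g z))"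
    using b unfolding bil_def by blast
next
  fix x y z z' show "T2 (m2 [(x, y)] (g (z + z'))) (m2 [(x, y)] (g z) @ m2 [(x, y)] (g z'))"
    using T2_trans[OF m2_resp2[OF good_add[OF g]] m2_app2] .
next
  have b: "bil T2 sH sH (\<lambda>a b. m2 [(a,b)] Y)" for Y by (rule m2s_bil)
  fix y z show "T2 (m2 [(0, y)] (g z)) []" using b unfolding bil_def by blast
next
  have b: "bil T2 sH sH (\<lambda>a b. m2 [(a,b)] Y)" for Y by (rule m2s_bil)
  fix x z show "T2 (m2 [(x, 0)] (g z)) []" using b unfolding bil_def by blast
next
  fix x y show "T2 (m2 [(x, y)] (g 0)) []" using m2_resp2[OF good_zero[OF g]] by simp
next
  have b: "bil T2 sH sH (\<lambda>a b. m2 [(a,b)] Y)" for Y by (rule m2s_bil)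
  fix c x y z show "T2 (m2 [(sH c x, y)] (g z)) (m2 [(x, sH c y)] (g z))" using b unfolding bil_def by blast
next
  have b: "bil T2 sH sH (\<lambda>a b. m2 [(a,b)] Y)" for Y by (rule m2s_bil)
  fix c x y z
  have 1: "T2 (m2 [(x, sH c y)] (g z)) (m2 [(sH c x, y)] (g z))"
    using b unfolding bil_def by (blast intro: T2_sym)
  have "m2 [(sH c x, y)] (g z) = scl c (m2 [(x, y)] (g z))"
    using scl_m2_1[of c "[(x,y)]"] by (simp add: scl_def)
  also have "scl c (m2 [(x, y)] (g z)) = m2 [(x, y)] (scl c (g z))" by (simp add: scl_m2_2)
  also have "T2 \<dots> (m2 [(x, y)] (g (sH c z)))" by (rule m2_resp2[OF T2_sym[OF good_sc[OF g]]])
  finally show "T2 (m2 [(x, sH c y)] (g z)) (m2 [(x, y)] (g (sH c z)))" using 1 T2_trans by blast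
qed


lemma T2_eq': "a = b \<Longrightarrow> T2 a b" by (simp add: T2_refl)

lemma GS_inner:
  "T2 (concat (map (\<lambda>(x,y). m2 [(P, x)] (GS (\<alpha> y))) (\<Delta> b))) [(mulH P (S (\<alpha> b)), oneH)]"
proof -
  define W where "W = (\<lambda>u p q. [(mulH P (S (\<alpha> q)), mulH (\<alpha> u) (S (\<alpha> p)))])"
  have "T2 (concat (map (\<lambda>(x,y). m2 [(P, x)] (GS (\<alpha> y))) (\<Delta> b)))
           (concat (map (\<lambda>(x,y). m2 [(P, x)] (mapa (GS y))) (\<Delta> b)))"
    by (rule T2_concat) (auto intro: m2_resp2[OF good_alpha[OF good_GS]])
  also have "T2 \<dots> (concat (map (\<lambda>(u,p,q). W u p q) (concat (map (\<lambda>(a, b). map (\<lambda>(x, y). (\<alpha> a, x, y)) (\<Delta> b)) (\<Delta> b)))))"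
    by (rule T2_eq') (simp add: W_def m2_single GS_def flipS_def mapa_def map_concat concat_concat comp_def
         case_prod_unfold alpha2 S_alpha)
  also have "T2 \<dots> (concat (map (\<lambda>(u,p,q). W u p q) (concat (map (\<lambda>(a, b). map (\<lambda>(x, y). (x, y, \<alpha> b)) (\<Delta> a)) (\<Delta> b)))))"
    by (rule t3_lift[OF T2 coassoc])
       (simp_all add: W_def alpha_lin S_lin mulH1_lin mulH2_lin t2_addl t2_addr t2_zerol t2_zeror T2_refl
         T2_sym[OF t2_bal])
  also have "T2 \<dots> (concat (map (\<lambda>(a',b'). map (\<lambda>(x',y'). (mulH P (S b'), \<alpha> (mulH x' (S y')))) (\<Delta> a')) (\<Delta> b)))"
    by (rule T2_eq') (simp add: W_def map_concat concat_concat comp_def case_prod_unfold alpha2 S_alpha alpha_mul)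
  also have "T2 \<dots> (concat (map (\<lambda>(a',b'). [(mulH P (S (sH (\<epsilon> a') b')), oneH)]) (\<Delta> b)))"
  proof (rule T2_concat)
    fix z :: "'h \<times> 'h"
    obtain a' b' where z: "z = (a',b')" by (cases z)
    have 1: "T2 (map (\<lambda>(x',y'). (mulH P (S b'), \<alpha> (mulH x' (S y')))) (\<Delta> a'))
            [(mulH P (S b'), sum_list (map (\<lambda>(x',y'). \<alpha> (mulH x' (S y'))) (\<Delta> a')))]"
      using collapse2[of "mulH P (S b')" "\<lambda>w. \<alpha> (mulH (fst w) (S (snd w)))" "\<Delta> a'"]
      by (simp add: case_prod_unfold)
    have 2: "sum_list (map (\<lambda>(x',y'). \<alpha> (mulH x' (S y'))) (\<Delta> a')) = sH (\<epsilon> a') oneH"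
      using hom_sum_list[OF alpha_hom, of "\<lambda>(x',y'). mulH x' (S y')" "\<Delta> a'"] antiR[of a']
      by (simp add: case_prod_unfold alpha_lin alpha_one)
    have 3: "T2 [(mulH P (S b'), sH (\<epsilon> a') oneH)] [(mulH P (S (sH (\<epsilon> a') b')), oneH)]"
      using T2_sym[OF t2_bal[of sH sH "\<epsilon> a'" "mulH P (S b')" oneH]] by (simp add: S_lin mulH1_lin)
    show "T2 ((\<lambda>(a',b'). map (\<lambda>(x',y'). (mulH P (S b'), \<alpha> (mulH x' (S y')))) (\<Delta> a')) z)
       ((\<lambda>(a',b'). [(mulH P (S (sH (\<epsilon> a') b')), oneH)]) z)"
      using T2_trans[OF 1[unfolded 2] 3] by (simp add: z)
  qed
  also have "T2 \<dots> (map (\<lambda>w. (mulH P (S (sH (\<epsilon> (fst w)) (snd w))), oneH)) (\<Delta> b))"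
    by (rule T2_eq') (simp add: case_prod_unfold)
  also have "T2 \<dots> [(sum_list (map (\<lambda>w. mulH P (S (sH (\<epsilon> (fst w)) (snd w)))) (\<Delta> b)), oneH)]"
    by (rule collapse1)
  also have "T2 \<dots> [(mulH P (S (\<alpha> b)), oneH)]"
  proof (rule T2_eq')
    have "sum_list (map (\<lambda>w. mulH P (S (sH (\<epsilon> (fst w)) (snd w)))) (\<Delta> b)) = mulH P (S (\<alpha> b))"
      using hom_sum_list[OF module_hom_compose[OF S_hom mulH_hom1, of P], of "\<lambda>w. sH (\<epsilon> (fst w)) (snd w)" "\<Delta> b"]
        counitL0[of b] by (simp add: case_prod_unfold ainv_eq comp_def)
    then show "[(sum_list (map (\<lambda>w. mulH P (S (sH (\<epsilon> (fst w)) (snd w)))) (\<Delta> b)), oneH)] = [(mulH P (S (\<alpha> b)), oneH)]"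
      by simp
  qed
  finally show ?thesis .
qed

lemma T2_eq: "a = b \<Longrightarrow> T2 a b" by (simp add: T2_refl)

lemma GS_inv: "T2 (conv \<Delta> GS h) (U h)"
proof -
  have "T2 (conv \<Delta> GS h) (concat (map (\<lambda>(x,y,z). m2 [(x,y)] (GS (\<alpha> z)))
      (concat (map (\<lambda>(a, b). map (\<lambda>(x, y). (x, y, \<alpha> b)) (\<Delta> a)) (\<Delta> h)))))"
    by (rule T2_eq) (simp add: conv_def m2_def map_concat concat_concat comp_def case_prod_unfold alpha2)
  also have "T2 \<dots> (concat (map (\<lambda>(x,y,z). m2 [(x,y)] (GS (\<alpha> z)))
      (concat (map (\<lambda>(a, b). map (\<lambda>(x, y). (\<alpha> a, x, y)) (\<Delta> b)) (\<Delta> h)))))"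
    by (rule psi_lift[OF good_alpha_comp[OF good_GS] tensor_eq3.t3_sym[OF coassoc]])
  also have "T2 \<dots> (concat (map (\<lambda>(a,b). concat (map (\<lambda>(x,y). m2 [(\<alpha> a, x)] (GS (\<alpha> y))) (\<Delta> b))) (\<Delta> h)))"
    by (rule T2_eq) (simp add: map_concat concat_concat comp_def case_prod_unfold)
  also have "T2 \<dots> (concat (map (\<lambda>(a,b). [(mulH (\<alpha> a) (S (\<alpha> b)), oneH)]) (\<Delta> h)))"
    by (rule T2_concat) (auto intro: GS_inner)
  also have "T2 \<dots> (map (\<lambda>w. (mulH (\<alpha> (fst w)) (S (\<alpha> (snd w))), oneH)) (\<Delta> h))"
    by (rule T2_eq) (simp add: case_prod_unfold)
  also have "T2 \<dots> [(sum_list (map (\<lambda>w. mulH (\<alpha> (fst w)) (S (\<alpha> (snd w)))) (\<Delta> h)), oneH)]"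
    by (rule collapse1)
  also have "T2 \<dots> (U h)"
  proof (rule T2_eq)
    have "sum_list (map (\<lambda>w. mulH (\<alpha> (fst w)) (S (\<alpha> (snd w)))) (\<Delta> h)) = sH (\<epsilon> h) oneH"
      using hom_sum_list[OF alpha_hom, of "\<lambda>(x',y'). mulH x' (S y')" "\<Delta> h"] antiR[of h]
      by (simp add: case_prod_unfold alpha_lin alpha_one alpha_mul S_alpha)
    then show "[(sum_list (map (\<lambda>w. mulH (\<alpha> (fst w)) (S (\<alpha> (snd w)))) (\<Delta> h)), oneH)] = U h"
      by (simp add: U_def)
  qed
  finally show ?thesis .
qed

lemma S_anti: "T2 (\<Delta> (S h)) (GS h)"
proof -
  have "T2 (FS h) (conv FS U h)" by (rule T2_sym[OF conv_unit_right[OF good_FS]])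
  also have "T2 \<dots> (conv FS (conv \<Delta> GS) h)"
    by (rule conv_resp) (auto intro: T2_refl T2_sym[OF GS_inv])
  also have "T2 \<dots> (conv (conv FS \<Delta>) GS h)" by (rule conv_assoc[OF good_FS good_D good_GS])
  also have "T2 \<dots> (conv U GS h)"
    by (rule conv_resp) (auto intro: T2_refl FS_inv)
  also have "T2 \<dots> (GS h)" by (rule conv_unit_left[OF good_GS])
  finally show ?thesis by (simp add: FS_def)
qed

end

context HH
begin

abbreviation "TA \<equiv> tensor_eq2 sA sH"
lemma TA: "lcong TA" by (rule lcong_t2)
lemmas TA_refl = lc_refl[OF TA] and TA_sym = lc_sym[OF TA] and TA_trans = lc_trans[OF TA]
declare TA_trans[trans]

lemma S_one: "S oneH = oneH"
proof -
  have "sum_list (map (\<lambda>(a, b). mulH (S a) b) (\<Delta> oneH)) = sum_list (map (\<lambda>(a, b). mulH (S a) b) [(oneH, oneH)])"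
    by (rule t2_sum[OF _ _ D_one]) (auto intro: module_hom_compose[OF S_hom mulH_hom2, unfolded comp_def] mulH_hom1)
  then have "\<alpha> (S oneH) = oneH" using antiL[of oneH] by (simp add: eps_one sHs unitH1)
  then show ?thesis by (metis alpha2 alpha_one)
qed

lemma rhoA_phiS: "TA (\<rho>A (\<phi> (S h))) (map (\<lambda>(a,b). (\<phi> (S b), S a)) (\<Delta> h))"
proof -
  have "TA (\<rho>A (\<phi> (S h))) (map (\<lambda>(a, b). (\<phi> a, b)) (\<Delta> (S h)))" by (rule phi_comod)
  also have "TA \<dots> (map (\<lambda>(a, b). (\<phi> a, b)) (GS h))"
    using t2_map[OF phi_hom idH_hom S_anti] by simp
  also have "map (\<lambda>(a, b). (\<phi> a, b)) (GS h) = map (\<lambda>(a,b). (\<phi> (S b), S a)) (\<Delta> h)"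
    by (simp add: GS_def flipS_def case_prod_unfold)
  finally show ?thesis .
qed

end

locale HM = HH sH mulH oneH \<Delta> \<epsilon> S \<alpha> sA mulA oneA \<beta> \<rho>A \<phi>
  for sH :: "'k::comm_ring_1 \<Rightarrow> 'h::ab_group_add \<Rightarrow> 'h"
    and mulH :: "'h \<Rightarrow> 'h \<Rightarrow> 'h" and oneH :: 'h
    and \<Delta> :: "'h \<Rightarrow> ('h \<times> 'h) list" and \<epsilon> :: "'h \<Rightarrow> 'k"
    and S :: "'h \<Rightarrow> 'h" and \<alpha> :: "'h \<Rightarrow> 'h"
    and sA :: "'k \<Rightarrow> 'a::ab_group_add \<Rightarrow> 'a"
    and mulA :: "'a \<Rightarrow> 'a \<Rightarrow> 'a" and oneA :: 'a and \<beta> :: "'a \<Rightarrow> 'a"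
    and \<rho>A :: "'a \<Rightarrow> ('a \<times> 'h) list"
    and \<phi> :: "'h \<Rightarrow> 'a" +
  fixes sM :: "'k \<Rightarrow> 'm::ab_group_add \<Rightarrow> 'm" and \<mu> :: "'m \<Rightarrow> 'm"
    and act :: "'m \<Rightarrow> 'a \<Rightarrow> 'm" and \<rho>M :: "'m \<Rightarrow> ('m \<times> 'h) list"
  assumes M: "relative_hom_hopf_module sH mulH \<Delta> \<epsilon> \<alpha> sA mulA oneA \<beta> \<rho>A sM \<mu> act \<rho>M"
begin

lemma Mmod: "right_hom_module sA mulA oneA \<beta> sM \<mu> act"
  and Mcom: "right_hom_comodule sH \<Delta> \<epsilon> \<alpha> sM \<mu> \<rho>M"
  and rM_act: "\<And>m a. tensor_eq2 sM sH (\<rho>M (act m a))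
        (concat (map (\<lambda>(x, u). map (\<lambda>(y, v). (act x y, mulH u v)) (\<rho>A a)) (\<rho>M m)))"
  using M unfolding relative_hom_hopf_module_def by blast+

lemma hoM: "hom_object sM \<mu>" using Mmod unfolding right_hom_module_def by blast
lemma modM: "module sM" using hoM unfolding hom_object_def by blast
lemma mu_hom: "module_hom sM sM \<mu>" using hoM unfolding hom_object_def by blast
lemma act_hom1: "module_hom sA sM (act m)" and act_hom2: "module_hom sM sM (\<lambda>x. act x a)"
  using Mmod unfolding right_hom_module_def k_bilinear_def by blast+
lemma act_assoc: "act (act m a) (\<beta> b) = act (\<mu> m) (mulA a b)"
  and act_one: "act m oneA = \<mu> m" and mu_act: "\<mu> (act m a) = act (\<mu> m) (\<beta> a)"
  using Mmod unfolding right_hom_module_def by blast+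

lemma rM_add: "tensor_eq2 sM sH (\<rho>M (x + y)) (\<rho>M x @ \<rho>M y)"
  and rM_scale: "tensor_eq2 sM sH (\<rho>M (sM r x)) (map (\<lambda>(a, b). (sM r a, b)) (\<rho>M x))"
  and rM_coassoc0: "tensor_eq3 sM sH sH
            (concat (map (\<lambda>(a, b). map (\<lambda>(x, y). (x, y, inv \<alpha> b)) (\<rho>M a)) (\<rho>M m)))
            (concat (map (\<lambda>(a, b). map (\<lambda>(x, y). (inv \<mu> a, x, y)) (\<Delta> b)) (\<rho>M m)))"
  and rM_counit: "sum_list (map (\<lambda>(a, b). sM (\<epsilon> b) a) (\<rho>M m)) = inv \<mu> m"
  and rM_mu: "tensor_eq2 sM sH (\<rho>M (\<mu> m)) (map (\<lambda>(a, b). (\<mu> a, \<alpha> b)) (\<rho>M m))"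
  using Mcom unfolding right_hom_comodule_def by blast+

lemma rM_coassoc: "tensor_eq3 sM sH sH
            (concat (map (\<lambda>(a, b). map (\<lambda>(x, y). (x, y, \<alpha> b)) (\<rho>M a)) (\<rho>M m)))
            (concat (map (\<lambda>(a, b). map (\<lambda>(x, y). (inv \<mu> a, x, y)) (\<Delta> b)) (\<rho>M m)))"
  using rM_coassoc0 by (simp add: ainv_eq)

abbreviation "TM \<equiv> tensor_eq2 sM sH"
lemma TM: "lcong TM" by (rule lcong_t2)
lemmas TM_refl = lc_refl[OF TM] and TM_sym = lc_sym[OF TM] and TM_trans = lc_trans[OF TM]
  and TM_app = lc_app[OF TM] and TM_concat = lc_concat[OF TM]
declare TM_trans[trans]
lemma TM_eq: "a = b \<Longrightarrow> TM a b" by (simp add: TM_refl)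

lemmas sMs = module.scale_left_distrib[OF modM] module.scale_right_distrib[OF modM]
  module.scale_scale[OF modM] module.scale_one[OF modM] module.scale_zero_left[OF modM]
  module.scale_zero_right[OF modM]
lemmas mu_lin = module_hom.add[OF mu_hom] module_hom.scale[OF mu_hom] module_hom.zero[OF mu_hom]
lemmas act1_lin = module_hom.add[OF act_hom1] module_hom.scale[OF act_hom1] module_hom.zero[OF act_hom1]
lemmas act2_lin = module_hom.add[OF act_hom2] module_hom.scale[OF act_hom2] module_hom.zero[OF act_hom2]
lemmas phi_lin = module_hom.add[OF phi_hom] module_hom.scale[OF phi_hom] module_hom.zero[OF phi_hom]
lemma minv: "\<mu> (inv \<mu> x) = x" "inv \<mu> (\<mu> x) = x" using hom_object_inv_simps[OF hoM] by auto
lemma minv_hom: "module_hom sM sM (inv \<mu>)" by (rule module_hom_inv[OF hoM])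
lemmas minv_lin = module_hom.add[OF minv_hom] module_hom.scale[OF minv_hom] module_hom.zero[OF minv_hom]

lemma rM_zero: "TM (\<rho>M 0) []"
proof -
  have "TM (\<rho>M (sM 0 0)) (map (\<lambda>(a, b). (sM 0 a, b)) (\<rho>M 0))" by (rule rM_scale)
  also have "TM \<dots> []"
    unfolding map_as_concat[of "\<lambda>(a, b). (sM 0 a, b)"]
    by (rule lc_concat_nil[OF TM]) (auto simp: sMs t2_zerol)
  finally show ?thesis by (simp add: sMs)
qed

lemma rM_sum: "TM (\<rho>M (sum_list (map g L))) (concat (map (\<lambda>z. \<rho>M (g z)) L))"
  by (rule lc_sum_fun[OF TM]) (auto simp: rM_add rM_zero)

definition pr :: "('m \<times> 'h) list \<Rightarrow> ('a \<times> 'h) list \<Rightarrow> ('m \<times> 'h) list" where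
  "pr X Y = concat (map (\<lambda>(x, u). map (\<lambda>(y, v). (act x y, mulH u v)) Y) X)"

lemma pr_resp2: "TA Y Y' \<Longrightarrow> TM (pr X Y) (pr X Y')"
  unfolding pr_def
proof (rule TM_concat)
  fix z assume "TA Y Y'"
  then show "TM ((\<lambda>(x, u). map (\<lambda>(y, v). (act x y, mulH u v)) Y) z)
                ((\<lambda>(x, u). map (\<lambda>(y, v). (act x y, mulH u v)) Y') z)"
    by (cases z) (simp add: t2_map[OF act_hom1 mulH_hom1])
qed

lemma pr_bil: "bil TM sM sH (\<lambda>x u. map (\<lambda>(y, v). (act x y, mulH u v)) Y)"
  unfolding map_as_concat[of "\<lambda>(y,v). (act _ y, mulH _ v)"]
  by (rule bil_concat[OF TM]) (auto simp: case_prod_unfold intro!: bil_pure act_hom2 mulH_hom2)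

lemma pr_resp1: "TM X X' \<Longrightarrow> TM (pr X Y) (pr X' Y)"
  unfolding pr_def using bil_lift[OF TM pr_bil] by simp

lemma tau_sum: "TM X Y \<Longrightarrow> sum_list (map (\<lambda>(a, b). act a (\<phi> (S b))) X) = sum_list (map (\<lambda>(a, b). act a (\<phi> (S b))) Y)"
  by (rule t2_sum[OF act_hom2]) (rule module_hom_compose[OF module_hom_compose[OF S_hom phi_hom] act_hom1, unfolded comp_def])

definition tau :: "'m \<Rightarrow> 'm" where "tau = tau_map act \<phi> S \<rho>M"
definition M0 :: "'m set" where "M0 = coinvariants sM sH oneH \<mu> \<rho>M"

lemma M0_iff: "m \<in> M0 \<longleftrightarrow> TM (\<rho>M m) [(inv \<mu> m, oneH)]"
  by (simp add: M0_def coinvariants_def)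

lemma tau_def': "tau m = sum_list (map (\<lambda>(a, b). act a (\<phi> (S b))) (\<rho>M m))"
  by (simp add: tau_def tau_map_def)

lemma tau_id: "m \<in> M0 \<Longrightarrow> tau m = m"
  unfolding M0_iff tau_def' by (drule tau_sum) (simp add: S_one phi_one act_one minv)

lemma inv_mu_act: "inv \<mu> (act m a) = act (inv \<mu> m) (inv \<beta> a)"
  by (metis minv mu_act binv(1))

lemma M0_act: "m \<in> M0 \<Longrightarrow> c \<in> coinvariants sA sH oneH \<beta> \<rho>A \<Longrightarrow> act m c \<in> M0"
proof -
  assume m: "m \<in> M0" and c: "c \<in> coinvariants sA sH oneH \<beta> \<rho>A"
  have "TM (\<rho>M (act m c)) (pr (\<rho>M m) (\<rho>A c))" unfolding pr_def by (rule rM_act)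
  also have "TM \<dots> (pr [(inv \<mu> m, oneH)] [(inv \<beta> c, oneH)])"
    using pr_resp1[OF m[unfolded M0_iff]] pr_resp2 c unfolding coinvariants_def
    using TM_trans by blast
  also have "pr [(inv \<mu> m, oneH)] [(inv \<beta> c, oneH)] = [(inv \<mu> (act m c), oneH)]"
    by (simp add: pr_def inv_mu_act unitH1 alpha_one)
  finally show ?thesis unfolding M0_iff .
qed

lemma M0_mu: "m \<in> M0 \<Longrightarrow> \<mu> m \<in> M0"
proof -
  assume m: "m \<in> M0"
  have "TM (\<rho>M (\<mu> m)) (map (\<lambda>(a, b). (\<mu> a, \<alpha> b)) (\<rho>M m))" by (rule rM_mu)
  also have "TM \<dots> (map (\<lambda>(a, b). (\<mu> a, \<alpha> b)) [(inv \<mu> m, oneH)])"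
    by (rule t2_map[OF mu_hom alpha_hom m[unfolded M0_iff]])
  finally show ?thesis unfolding M0_iff by (simp add: minv alpha_one)
qed

lemma rM_minv: "TM (\<rho>M (inv \<mu> m)) (map (\<lambda>(a, b). (inv \<mu> a, \<alpha> b)) (\<rho>M m))"
proof -
  have "TM (map (\<lambda>(a, b). (inv \<mu> a, \<alpha> b)) (\<rho>M (\<mu> (inv \<mu> m))))
           (map (\<lambda>(a, b). (inv \<mu> a, \<alpha> b)) (map (\<lambda>(a, b). (\<mu> a, \<alpha> b)) (\<rho>M (inv \<mu> m))))"
    by (rule t2_map[OF minv_hom alpha_hom rM_mu])
  moreover have "map (\<lambda>(a, b). (inv \<mu> a, \<alpha> b)) (map (\<lambda>(a, b). (\<mu> a, \<alpha> b)) X) = X" for X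
    by (induction X) (auto simp: minv alpha2)
  ultimately show ?thesis by (simp add: minv TM_sym)
qed

lemma M0_minv: "m \<in> M0 \<Longrightarrow> inv \<mu> m \<in> M0"
proof -
  assume m: "m \<in> M0"
  have "TM (\<rho>M (inv \<mu> m)) (map (\<lambda>(a, b). (inv \<mu> a, \<alpha> b)) (\<rho>M m))" by (rule rM_minv)
  also have "TM \<dots> (map (\<lambda>(a, b). (inv \<mu> a, \<alpha> b)) [(inv \<mu> m, oneH)])"
    by (rule t2_map[OF minv_hom alpha_hom m[unfolded M0_iff]])
  finally show ?thesis unfolding M0_iff by (simp add: alpha_one)
qed

lemma mu_M0: "\<mu> ` M0 = M0"
proof
  show "\<mu> ` M0 \<subseteq> M0" using M0_mu by blast
next
  show "M0 \<subseteq> \<mu> ` M0"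
  proof
    fix m assume "m \<in> M0"
    then have "inv \<mu> m \<in> M0" by (rule M0_minv)
    then show "m \<in> \<mu> ` M0" by (metis image_eqI minv(1))
  qed
qed

lemma tau_hom: "module_hom sM sM tau"
  unfolding module_hom_iff
proof (intro conjI allI)
  show "module sM" by (rule modM)
  show "module sM" by (rule modM)
next
  fix x y
  show "tau (x + y) = tau x + tau y"
    unfolding tau_def' using tau_sum[OF rM_add[of x y]] by simp
next
  fix c x
  have "tau (sM c x) = sum_list (map (\<lambda>(a, b). act a (\<phi> (S b))) (map (\<lambda>(a, b). (sM c a, b)) (\<rho>M x)))"
    unfolding tau_def' using tau_sum[OF rM_scale] by simp
  also have "\<dots> = sM c (tau x)"
    unfolding tau_def' by (simp add: module.scale_sum_list[OF modM] case_prod_unfold act2_lin comp_def)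
  finally show "tau (sM c x) = sM c (tau x)" .
qed

lemma tau_mu: "tau (\<mu> m) = \<mu> (tau m)"
proof -
  have "tau (\<mu> m) = sum_list (map (\<lambda>(a, b). act a (\<phi> (S b))) (map (\<lambda>(a, b). (\<mu> a, \<alpha> b)) (\<rho>M m)))"
    unfolding tau_def' using tau_sum[OF rM_mu] by simp
  also have "\<dots> = \<mu> (tau m)"
    unfolding tau_def' by (simp add: hom_sum_list[OF mu_hom] case_prod_unfold mu_act S_alpha phi_alpha comp_def)
  finally show ?thesis .
qed


definition \<Theta> :: "'m \<Rightarrow> 'h \<Rightarrow> 'h \<Rightarrow> ('m \<times> 'h) list" where
  "\<Theta> x u w = map (\<lambda>(p,q). (act x (\<phi> (S q)), mulH u (S p))) (\<Delta> (\<alpha> w))"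

lemma actphiS_hom: "module_hom sH sM (\<lambda>q. act x (\<phi> (S q)))"
  by (rule module_hom_compose[OF module_hom_compose[OF S_hom phi_hom] act_hom1, unfolded comp_def])
lemma mulS_hom: "module_hom sH sH (\<lambda>p. mulH u (S p))"
  by (rule module_hom_compose[OF S_hom mulH_hom1, unfolded comp_def])

lemma tau_inner: "TM (concat (map (\<lambda>(p,q). \<Theta> Y p q) (\<Delta> z))) [(act Y (\<phi> (S (\<alpha> z))), oneH)]"
proof -
  define F where "F = (\<lambda>(c::'h, d::'h). (act Y (\<phi> (\<alpha> c)), d))"
  have f: "module_hom sH sM (\<lambda>c. act Y (\<phi> (\<alpha> c)))"
    by (rule module_hom_compose[OF module_hom_compose[OF alpha_hom phi_hom] act_hom1, unfolded comp_def])
  have "concat (map (\<lambda>(p,q). \<Theta> Y p q) (\<Delta> z)) = map F (concat (map (\<lambda>(x,y). m2 [(oneH, x)] (GS (\<alpha> y))) (\<Delta> z)))"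
    by (simp add: \<Theta>_def F_def m2_single GS_def flipS_def map_concat comp_def case_prod_unfold unitH2 alpha2)
  also have "TM \<dots> (map F [(mulH oneH (S (\<alpha> z)), oneH)])"
    unfolding F_def by (rule t2_map[OF f idH_hom GS_inner])
  also have "map F [(mulH oneH (S (\<alpha> z)), oneH)] = [(act Y (\<phi> (S (\<alpha> z))), oneH)]"
    by (simp add: F_def unitH2 alpha2)
  finally show ?thesis .
qed

lemma Theta_bil: "bil TM sM sH (\<lambda>x u. \<Theta> x u w)"
  unfolding \<Theta>_def map_as_concat[of "\<lambda>(p,q). (act _ (\<phi> (S q)), mulH _ (S p))"]
  by (rule bil_concat[OF TM]) (auto simp: case_prod_unfold intro!: bil_pure act_hom2 mulH_hom2)

lemma Theta_map: "T2 X Y \<Longrightarrow> TM (map (\<lambda>(p,q). (act x (\<phi> (S q)), mulH u (S p))) X) (map (\<lambda>(p,q). (act x (\<phi> (S q)), mulH u (S p))) Y)"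
  by (rule t2_map_swap[OF actphiS_hom mulS_hom])

lemma tau_M0: "tau m \<in> M0"
proof -
  let ?g = "\<lambda>w. act (fst w) (\<phi> (S (snd w)))"
  have "tau m = sum_list (map ?g (\<rho>M m))" by (simp add: tau_def' case_prod_unfold)
  then have "TM (\<rho>M (tau m)) (concat (map (\<lambda>w. \<rho>M (?g w)) (\<rho>M m)))" using rM_sum by simp
  also have "TM \<dots> (concat (map (\<lambda>w. pr (\<rho>M (fst w)) (\<rho>A (\<phi> (S (snd w))))) (\<rho>M m)))"
    by (rule TM_concat) (simp add: pr_def rM_act)
  also have "TM \<dots> (concat (map (\<lambda>w. pr (\<rho>M (fst w)) (map (\<lambda>(a,b). (\<phi> (S b), S a)) (\<Delta> (snd w)))) (\<rho>M m)))"
    by (rule TM_concat) (rule pr_resp2[OF rhoA_phiS])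
  also have "TM \<dots> (concat (map (\<lambda>(x,u,w). \<Theta> x u w) (concat (map (\<lambda>(a, b). map (\<lambda>(x, y). (x, y, \<alpha> b)) (\<rho>M a)) (\<rho>M m)))))"
    by (rule TM_eq) (simp add: pr_def \<Theta>_def map_concat concat_concat comp_def case_prod_unfold alpha2)
  also have "TM \<dots> (concat (map (\<lambda>(x,u,w). \<Theta> x u w) (concat (map (\<lambda>(a, b). map (\<lambda>(x, y). (inv \<mu> a, x, y)) (\<Delta> b)) (\<rho>M m)))))"
  proof (rule t3_lift[OF TM rM_coassoc])
    have b: "bil TM sM sH (\<lambda>x u. \<Theta> x u w)" for w by (rule Theta_bil)
    {
      fix x x' u w show "TM (\<Theta> (x + x') u w) (\<Theta> x u w @ \<Theta> x' u w)" using b unfolding bil_def by blast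
    next
      fix x u u' w show "TM (\<Theta> x (u + u') w) (\<Theta> x u w @ \<Theta> x u' w)" using b unfolding bil_def by blast
    next
      fix u w show "TM (\<Theta> 0 u w) []" using b unfolding bil_def by blast
    next
      fix x w show "TM (\<Theta> x 0 w) []" using b unfolding bil_def by blast
    next
      fix c x u w show "TM (\<Theta> (sM c x) u w) (\<Theta> x (sH c u) w)" using b unfolding bil_def by blast
    }
  next
    fix x u w w'
    show "TM (\<Theta> x u (w + w')) (\<Theta> x u w @ \<Theta> x u w')"
      unfolding \<Theta>_def alpha_add' using Theta_map[OF D_add] by simp
  next
    fix x u
    show "TM (\<Theta> x u 0) []"
      unfolding \<Theta>_def alpha_0' using Theta_map[OF good_zero[OF good_D]] by simp
  next
    fix c x u w
    have "TM (\<Theta> x u (sH c w)) (map (\<lambda>(p,q). (act x (\<phi> (S q)), mulH u (S p))) (scl c (\<Delta> (\<alpha> w))))"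
      unfolding \<Theta>_def alpha_sc' by (rule Theta_map[OF good_sc[OF good_D]])
    also have "map (\<lambda>(p,q). (act x (\<phi> (S q)), mulH u (S p))) (scl c (\<Delta> (\<alpha> w))) = \<Theta> x (sH c u) w"
      by (simp add: \<Theta>_def scl_def case_prod_unfold S_lin mulH1_lin mulH2_lin)
    finally show "TM (\<Theta> x (sH c u) w) (\<Theta> x u (sH c w))" by (rule TM_sym)
  qed
  also have "TM \<dots> (concat (map (\<lambda>(y,z). concat (map (\<lambda>(p,q). \<Theta> (inv \<mu> y) p q) (\<Delta> z))) (\<rho>M m)))"
    by (rule TM_eq) (simp add: map_concat concat_concat comp_def case_prod_unfold)
  also have "TM \<dots> (concat (map (\<lambda>(y,z). [(act (inv \<mu> y) (\<phi> (S (\<alpha> z))), oneH)]) (\<rho>M m)))"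
    by (rule TM_concat) (auto intro: tau_inner)
  also have "TM \<dots> (map (\<lambda>w. (act (inv \<mu> (fst w)) (\<phi> (S (\<alpha> (snd w)))), oneH)) (\<rho>M m))"
    by (rule TM_eq) (simp add: case_prod_unfold)
  also have "TM \<dots> [(sum_list (map (\<lambda>w. act (inv \<mu> (fst w)) (\<phi> (S (\<alpha> (snd w))))) (\<rho>M m)), oneH)]"
    by (rule gcollapse1)
  also have "TM \<dots> [(inv \<mu> (tau m), oneH)]"
  proof (rule TM_eq)
    have ib: "inv \<beta> (\<phi> x) = \<phi> (\<alpha> x)" for x by (metis binv(2) phi_alpha alpha2)
    have "inv \<mu> (tau m) = sum_list (map (\<lambda>w. inv \<mu> (?g w)) (\<rho>M m))"
      unfolding tau_def' using hom_sum_list[OF minv_hom, of ?g "\<rho>M m"] by (simp add: case_prod_unfold)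
    also have "\<dots> = sum_list (map (\<lambda>w. act (inv \<mu> (fst w)) (\<phi> (S (\<alpha> (snd w))))) (\<rho>M m))"
      by (simp add: inv_mu_act ib S_alpha)
    finally show "[(sum_list (map (\<lambda>w. act (inv \<mu> (fst w)) (\<phi> (S (\<alpha> (snd w))))) (\<rho>M m)), oneH)] = [(inv \<mu> (tau m), oneH)]"
      by simp
  qed
  finally show ?thesis unfolding M0_iff .
qed


lemma tau_act:
  assumes cen: "\<phi> ` UNIV \<subseteq> center mulA" and c: "c \<in> coinvariants sA sH oneH \<beta> \<rho>A"
  shows "tau (act m c) = act (tau m) c"
proof -
  have "tau (act m c) = sum_list (map (\<lambda>(a, b). act a (\<phi> (S b))) (pr (\<rho>M m) (\<rho>A c)))"
    unfolding tau_def' pr_def by (rule tau_sum[OF rM_act])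
  also have "\<dots> = sum_list (map (\<lambda>(a, b). act a (\<phi> (S b))) (pr (\<rho>M m) [(inv \<beta> c, oneH)]))"
    using c unfolding coinvariants_def by (auto intro!: tau_sum pr_resp2)
  also have "\<dots> = sum_list (map (\<lambda>w. act (act (fst w) (\<phi> (S (snd w)))) c) (\<rho>M m))"
  proof -
    have "act (act x (inv \<beta> c)) (\<phi> (S (mulH u oneH))) = act (act x (\<phi> (S u))) c" for x u
    proof -
      have cz: "mulA (inv \<beta> c) (\<phi> (S u)) = mulA (\<phi> (S u)) (inv \<beta> c)"
      proof -
        have "\<phi> (S u) \<in> center mulA" using cen by blast
        then show ?thesis unfolding center_def by simp
      qed
      have "act (act x (inv \<beta> c)) (\<phi> (S (mulH u oneH))) = act (act x (inv \<beta> c)) (\<beta> (\<phi> (S u)))"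
        by (simp add: unitH1 S_alpha phi_alpha)
      also have "\<dots> = act (\<mu> x) (mulA (\<phi> (S u)) (inv \<beta> c))" by (simp add: act_assoc cz)
      also have "\<dots> = act (act x (\<phi> (S u))) c" by (simp add: act_assoc[symmetric] binv)
      finally show ?thesis .
    qed
    then show ?thesis by (simp add: pr_def case_prod_unfold comp_def)
  qed
  also have "\<dots> = act (tau m) c"
    unfolding tau_def' using hom_sum_list[OF act_hom2, of "\<lambda>w. act (fst w) (\<phi> (S (snd w)))" "\<rho>M m" c]
    by (simp add: case_prod_unfold)
  finally show ?thesis .
qed

end

context HH
begin

lemma A_rel: "relative_hom_hopf_module sH mulH \<Delta> \<epsilon> \<alpha> sA mulA oneA \<beta> \<rho>A sA \<beta> mulA \<rho>A"
  unfolding relative_hom_hopf_module_def right_hom_module_def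
  using hoA Aalg Acomod rA_mul unfolding monoidal_hom_algebra_def by (auto simp: assocA)

lemma tauA_left:
  assumes c: "c \<in> coinvariants sA sH oneH \<beta> \<rho>A"
  shows "tau_map mulA \<phi> S \<rho>A (mulA c b) = mulA c (tau_map mulA \<phi> S \<rho>A b)"
proof -
  interpret AM: HM sH mulH oneH \<Delta> \<epsilon> S \<alpha> sA mulA oneA \<beta> \<rho>A \<phi> sA \<beta> mulA \<rho>A
    by unfold_locales (rule A_rel)
  have "AM.tau (mulA c b) = sum_list (map (\<lambda>(a, b). mulA a (\<phi> (S b))) (AM.pr (\<rho>A c) (\<rho>A b)))"
    unfolding AM.tau_def' AM.pr_def by (rule AM.tau_sum[OF rA_mul])
  also have "\<dots> = sum_list (map (\<lambda>(a, b). mulA a (\<phi> (S b))) (AM.pr [(inv \<beta> c, oneH)] (\<rho>A b)))"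
    using c unfolding coinvariants_def by (auto intro!: AM.tau_sum AM.pr_resp1)
  also have "\<dots> = sum_list (map (\<lambda>w. mulA c (mulA (fst w) (\<phi> (S (snd w))))) (\<rho>A b))"
  proof -
    have "mulA (mulA (inv \<beta> c) y) (\<phi> (S (mulH oneH v))) = mulA c (mulA y (\<phi> (S v)))" for y v
      by (simp add: unitH2 S_alpha phi_alpha assocA[symmetric] binv)
    then show ?thesis by (simp add: AM.pr_def case_prod_unfold comp_def)
  qed
  also have "\<dots> = mulA c (AM.tau b)"
    unfolding AM.tau_def' using hom_sum_list[OF mulA_hom1, of c "\<lambda>w. mulA (fst w) (\<phi> (S (snd w)))" "\<rho>A b"]
    by (simp add: case_prod_unfold)
  finally show ?thesis by (simp add: AM.tau_def)
qed

end

theorem proposition4p5: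
  fixes sH :: "'k::comm_ring_1 \<Rightarrow> 'h::ab_group_add \<Rightarrow> 'h"
    and mulH :: "'h \<Rightarrow> 'h \<Rightarrow> 'h" and oneH :: 'h
    and \<Delta> :: "'h \<Rightarrow> ('h \<times> 'h) list" and \<epsilon> :: "'h \<Rightarrow> 'k"
    and S :: "'h \<Rightarrow> 'h" and \<alpha> :: "'h \<Rightarrow> 'h"
    and sA :: "'k \<Rightarrow> 'a::ab_group_add \<Rightarrow> 'a"
    and mulA :: "'a \<Rightarrow> 'a \<Rightarrow> 'a" and oneA :: 'a and \<beta> :: "'a \<Rightarrow> 'a"
    and \<rho>A :: "'a \<Rightarrow> ('a \<times> 'h) list"
    and \<phi> :: "'h \<Rightarrow> 'a"
    and sM :: "'k \<Rightarrow> 'm::ab_group_add \<Rightarrow> 'm" and \<mu> :: "'m \<Rightarrow> 'm"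
    and act :: "'m \<Rightarrow> 'a \<Rightarrow> 'm" and \<rho>M :: "'m \<Rightarrow> ('m \<times> 'h) list"
  assumes H: "monoidal_hom_hopf sH mulH oneH \<Delta> \<epsilon> S \<alpha>"
    and A: "right_hom_comodule_algebra sH mulH oneH \<Delta> \<epsilon> \<alpha> sA mulA oneA \<beta> \<rho>A"
    and phi: "total_integral sH oneH \<Delta> \<alpha> sA oneA \<beta> \<rho>A \<phi>"
    and phi_mult: "\<forall>h g. \<phi> (mulH h g) = mulA (\<phi> h) (\<phi> g)"
    and M: "relative_hom_hopf_module sH mulH \<Delta> \<epsilon> \<alpha> sA mulA oneA \<beta> \<rho>A sM \<mu> act \<rho>M"
  defines "M0 \<equiv> coinvariants sM sH oneH \<mu> \<rho>M"
    and "C \<equiv> coinvariants sA sH oneH \<beta> \<rho>A"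
    and "\<tau>M \<equiv> tau_map act \<phi> S \<rho>M"
    and "\<tau>A \<equiv> tau_map mulA \<phi> S \<rho>A"
  shows
    \<comment> \<open>(1)\<close>
    "((\<forall>m. \<tau>M m \<in> M0) \<and> (\<forall>m\<in>M0. \<tau>M m = m)) \<and>
    \<comment> \<open>(2) tau_A : A \<rightarrow> C is a left (C,beta)-Hom-module morphism retracting the inclusion C \<subseteq> A\<close>
     ((\<forall>b. \<tau>A b \<in> C) \<and> (\<forall>c\<in>C. \<tau>A c = c) \<and>
         (\<forall>c\<in>C. \<forall>c'\<in>C. mulA c c' \<in> C) \<and> \<beta> ` C = C \<and>
         module_hom sA sA \<tau>A \<and> (\<forall>b. \<tau>A (\<beta> b) = \<beta> (\<tau>A b)) \<and>
         (\<forall>c\<in>C. \<forall>b. \<tau>A (mulA c b) = mulA c (\<tau>A b))) \<and>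
    \<comment> \<open>(3) under phi(H) \<subseteq> Z(A): tau_M is a right (C,beta)-Hom-module morphism splitting M0 \<subseteq> M\<close>
     (\<phi> ` UNIV \<subseteq> center mulA \<longrightarrow>
         (\<forall>m\<in>M0. \<forall>c\<in>C. act m c \<in> M0) \<and> \<mu> ` M0 = M0 \<and>
         module_hom sM sM \<tau>M \<and> (\<forall>m. \<tau>M (\<mu> m) = \<mu> (\<tau>M m)) \<and>
         (\<forall>m. \<forall>c\<in>C. \<tau>M (act m c) = act (\<tau>M m) c) \<and>
         (\<forall>m. \<tau>M m \<in> M0) \<and> (\<forall>m\<in>M0. \<tau>M m = m))"
proof -
  interpret HH sH mulH oneH \<Delta> \<epsilon> S \<alpha> sA mulA oneA \<beta> \<rho>A \<phi>
    using H A phi phi_mult by unfold_locales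
  interpret MM: HM sH mulH oneH \<Delta> \<epsilon> S \<alpha> sA mulA oneA \<beta> \<rho>A \<phi> sM \<mu> act \<rho>M
    using M by unfold_locales
  interpret AM: HM sH mulH oneH \<Delta> \<epsilon> S \<alpha> sA mulA oneA \<beta> \<rho>A \<phi> sA \<beta> mulA \<rho>A
    using A_rel by unfold_locales
  have eM0: "M0 = MM.M0" by (simp only: assms MM.M0_def)
  have eC: "C = AM.M0" by (simp only: assms AM.M0_def)
  have etM: "\<tau>M = MM.tau" by (simp only: assms MM.tau_def)
  have etA: "\<tau>A = AM.tau" by (simp only: assms AM.tau_def)
  have CC: "AM.M0 = coinvariants sA sH oneH \<beta> \<rho>A" by (simp only: AM.M0_def)
  have p1: "(\<forall>m. \<tau>M m \<in> M0) \<and> (\<forall>m\<in>M0. \<tau>M m = m)"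
    unfolding eM0 etM using MM.tau_M0 MM.tau_id by blast
  have p2: "(\<forall>b. \<tau>A b \<in> C) \<and> (\<forall>c\<in>C. \<tau>A c = c) \<and>
         (\<forall>c\<in>C. \<forall>c'\<in>C. mulA c c' \<in> C) \<and> \<beta> ` C = C \<and>
         module_hom sA sA \<tau>A \<and> (\<forall>b. \<tau>A (\<beta> b) = \<beta> (\<tau>A b)) \<and>
         (\<forall>c\<in>C. \<forall>b. \<tau>A (mulA c b) = mulA c (\<tau>A b))"
    unfolding eC etA
  proof (intro conjI ballI allI)
    show "AM.tau b \<in> AM.M0" for b by (rule AM.tau_M0)
    show "c \<in> AM.M0 \<Longrightarrow> AM.tau c = c" for c by (rule AM.tau_id)
    show "c \<in> AM.M0 \<Longrightarrow> c' \<in> AM.M0 \<Longrightarrow> mulA c c' \<in> AM.M0" for c c'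
      using AM.M0_act[of c c'] CC by simp
    show "\<beta> ` AM.M0 = AM.M0" by (rule AM.mu_M0)
    show "module_hom sA sA AM.tau" by (rule AM.tau_hom)
    show "AM.tau (\<beta> b) = \<beta> (AM.tau b)" for b by (rule AM.tau_mu)
    show "c \<in> AM.M0 \<Longrightarrow> AM.tau (mulA c b) = mulA c (AM.tau b)" for c b
      using tauA_left[of c b] CC by (simp add: AM.tau_def)
  qed
  have p3: "\<phi> ` UNIV \<subseteq> center mulA \<longrightarrow>
         (\<forall>m\<in>M0. \<forall>c\<in>C. act m c \<in> M0) \<and> \<mu> ` M0 = M0 \<and>
         module_hom sM sM \<tau>M \<and> (\<forall>m. \<tau>M (\<mu> m) = \<mu> (\<tau>M m)) \<and>
         (\<forall>m. \<forall>c\<in>C. \<tau>M (act m c) = act (\<tau>M m) c) \<and>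
         (\<forall>m. \<tau>M m \<in> M0) \<and> (\<forall>m\<in>M0. \<tau>M m = m)"
    unfolding eM0 eC etM
  proof (intro impI conjI ballI allI)
    assume cen: "\<phi> ` UNIV \<subseteq> center mulA"
    show "m \<in> MM.M0 \<Longrightarrow> c \<in> AM.M0 \<Longrightarrow> act m c \<in> MM.M0" for m c
      using MM.M0_act[of m c] CC by simp
    show "\<mu> ` MM.M0 = MM.M0" by (rule MM.mu_M0)
    show "module_hom sM sM MM.tau" by (rule MM.tau_hom)
    show "MM.tau (\<mu> m) = \<mu> (MM.tau m)" for m by (rule MM.tau_mu)
    show "c \<in> AM.M0 \<Longrightarrow> MM.tau (act m c) = act (MM.tau m) c" for m c
      using MM.tau_act[OF cen, of c m] CC by simp
    show "MM.tau m \<in> MM.M0" for m by (rule MM.tau_M0)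
    show "m \<in> MM.M0 \<Longrightarrow> MM.tau m = m" for m by (rule MM.tau_id)
  qed
  show ?thesis using p1 p2 p3 by blast
qed


end
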